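(* Let $(V,L,\varphi,E)$ and $(V,C,\psi,E)$ be valuation systems. Assume that $\psi$ extends $\varphi$ and that $\psi$ is extendible. Then $\varphi$ is extendible and $\overline\psi$ extends $\overline\varphi$.
   Context: A valuation system $(V,L,\varphi,E)$ consists of: (i) a lattice $V$ which is $\sigma$-distributive (for every $a\in V$ and sequence $(b_n)$ with existing infimum, $\bigwedge_n(a\vee b_n)$ exists and equals $a\vee\bigwedge_n b_n$, and dually for suprema); (ii) a sublattice $L$ of $V$; (iii) a partially ordered abelian group $E$ which is R-complete (whenever $x_1\ge x_2\ge\cdots$ and $y_1\ge y_2\ge\cdots$ in $E$ are such that $\bigwedge_n(x_n+y_n)$ exists, $\bigwedge_n x_n$ and $\bigwedge_n y_n$ exist; dually for increasing sequences); (iv) a valuation $\varphi:L\to E$ (order-preserving, $\varphi(a\wedge b)+\varphi(a\vee b)=\varphi(a)+\varphi(b)$). A map $\psi:C\to E$ extends $\varphi:L\to E$ if $L\subseteq C$ and $\psi|_L=\varphi$. A decreasing (resp. increasing) sequence $(a_n)$ in $L$ is $\varphi$-convergent if $\bigwedge_n a_n$ exists in $V$ and $\bigwedge_n\varphi(a_n)$ exists in $E$ (resp. with suprema). $\Pi L:=\{\bigwedge_n a_n:(a_n)\ \varphi\text{-convergent decreasing}\}$ and $\varphi$ is $\Pi$-extendible if there is a valuation $\Pi\varphi:\Pi L\to E$ with $\Pi\varphi(\bigwedge_n a_n)=\bigwedge_n\varphi(a_n)$ for all such sequences; $\Sigma L,\Sigma$-extendible, $\Sigma\varphi$ dually. Hierarchy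 (transfinite recursion): $\Pi_0\varphi=\Sigma_0\varphi=\varphi$; $\varphi$ is $\Pi_{\alpha+1}$-extendible iff it is $\Sigma_\alpha$-extendible and $\Sigma_\alpha\varphi$ is $\Pi$-extendible, with $\Pi_{\alpha+1}\varphi=\Pi(\Sigma_\alpha\varphi)$; $\varphi$ is $\Sigma_{\alpha+1}$-extendible iff it is $\Pi_\alpha$-extendible and $\Pi_\alpha\varphi$ is $\Sigma$-extendible, with $\Sigma_{\alpha+1}\varphi=\Sigma(\Pi_\alpha\varphi)$; at a limit $\lambda$, $\varphi$ is $\Pi_\lambda$-extendible iff $\Pi_\alpha$-extendible for all $\alpha<\lambda$, and then $\Pi_\lambda\varphi$ is the common extension of the $\Pi_\alpha\varphi$ on $\bigcup_{\alpha<\lambda}\Pi_\alpha L$; similarly $\Sigma_\lambda$. The hierarchy has collapsed at $Q$, where $Q=\Pi_\alpha\varphi$ or $Q=\Sigma_\alpha\varphi$, if $\varphi$ is $\Pi_{\alpha+1}$- and $\Sigma_{\alpha+1}$-extendible and $\Pi(Q)=Q=\Sigma(Q)$. $\varphi$ is extendible if the hierarchy has collapsed at some $Q$; this $Q$ is then unique and denoted $\overline\varphi$. Same for $\psi$. *)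

theory Defs
  imports Main
begin

definition is_inf_of :: "'a::order set \<Rightarrow> 'a \<Rightarrow> bool" where
  "is_inf_of S x \<longleftrightarrow> (\<forall>y\<in>S. x \<le> y) \<and> (\<forall>z. (\<forall>y\<in>S. z \<le> y) \<longrightarrow> z \<le> x)"

definition is_sup_of :: "'a::order set \<Rightarrow> 'a \<Rightarrow> bool" where
  "is_sup_of S x \<longleftrightarrow> (\<forall>y\<in>S. y \<le> x) \<and> (\<forall>z. (\<forall>y\<in>S. y \<le> z) \<longrightarrow> x \<le> z)"

definition sigma_distributive :: "'v::lattice itself \<Rightarrow> bool" where
  "sigma_distributive _ \<longleftrightarrow>
     (\<forall>(a::'v) (b::nat \<Rightarrow> 'v) x. is_inf_of (range b) x \<longrightarrow>
         is_inf_of (range (\<lambda>n. sup a (b n))) (sup a x)) \<and>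
     (\<forall>(a::'v) (b::nat \<Rightarrow> 'v) x. is_sup_of (range b) x \<longrightarrow>
         is_sup_of (range (\<lambda>n. inf a (b n))) (inf a x))"

definition R_complete :: "'e::ordered_ab_group_add itself \<Rightarrow> bool" where
  "R_complete _ \<longleftrightarrow>
     (\<forall>(x::nat \<Rightarrow> 'e) y. antimono x \<and> antimono y \<and>
         (\<exists>z. is_inf_of (range (\<lambda>n. x n + y n)) z) \<longrightarrow>
         (\<exists>u. is_inf_of (range x) u) \<and> (\<exists>v. is_inf_of (range y) v)) \<and>
     (\<forall>(x::nat \<Rightarrow> 'e) y. mono x \<and> mono y \<and>
         (\<exists>z. is_sup_of (range (\<lambda>n. x n + y n)) z) \<longrightarrow>
         (\<exists>u. is_sup_of (range x) u) \<and> (\<exists>v. is_sup_of (range y) v))"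

definition sublattice :: "'v::lattice set \<Rightarrow> bool" where
  "sublattice L \<longleftrightarrow> (\<forall>a\<in>L. \<forall>b\<in>L. inf a b \<in> L \<and> sup a b \<in> L)"

definition valuation :: "'v::lattice set \<Rightarrow> ('v \<Rightarrow> 'e::ordered_ab_group_add) \<Rightarrow> bool" where
  "valuation L \<phi> \<longleftrightarrow> sublattice L \<and>
     (\<forall>a\<in>L. \<forall>b\<in>L. a \<le> b \<longrightarrow> \<phi> a \<le> \<phi> b) \<and>
     (\<forall>a\<in>L. \<forall>b\<in>L. \<phi> (inf a b) + \<phi> (sup a b) = \<phi> a + \<phi> b)"

text \<open>A valuation system (V,L,phi,E), with V the lattice type 'v and E the group type 'e.\<close>
definition valuation_system :: "'v::lattice set \<Rightarrow> ('v \<Rightarrow> 'e::ordered_ab_group_add) \<Rightarrow> bool" where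
  "valuation_system L \<phi> \<longleftrightarrow> sigma_distributive TYPE('v) \<and> R_complete TYPE('e) \<and>
     sublattice L \<and> valuation L \<phi>"

section \<open>Partial maps: a map m : 'v \<rightharpoonup> 'e stands for the function mval m on dom m\<close>

definition mval :: "('v \<rightharpoonup> 'e) \<Rightarrow> 'v \<Rightarrow> 'e" where
  "mval m a = the (m a)"

definition to_map :: "'v set \<Rightarrow> ('v \<Rightarrow> 'e) \<Rightarrow> ('v \<rightharpoonup> 'e)" where
  "to_map L \<phi> = (\<lambda>x. if x \<in> L then Some (\<phi> x) else None)"

definition is_valuation_map :: "('v::lattice \<rightharpoonup> 'e::ordered_ab_group_add) \<Rightarrow> bool" where
  "is_valuation_map m \<longleftrightarrow> valuation (dom m) (mval m)"

definition conv_dec :: "('v::lattice \<rightharpoonup> 'e::ordered_ab_group_add) \<Rightarrow> (nat \<Rightarrow> 'v) \<Rightarrow> bool" where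
  "conv_dec m a \<longleftrightarrow> (\<forall>n. a n \<in> dom m) \<and> antimono a \<and>
     (\<exists>x. is_inf_of (range a) x) \<and> (\<exists>e. is_inf_of (range (\<lambda>n. mval m (a n))) e)"

definition conv_inc :: "('v::lattice \<rightharpoonup> 'e::ordered_ab_group_add) \<Rightarrow> (nat \<Rightarrow> 'v) \<Rightarrow> bool" where
  "conv_inc m a \<longleftrightarrow> (\<forall>n. a n \<in> dom m) \<and> mono a \<and>
     (\<exists>x. is_sup_of (range a) x) \<and> (\<exists>e. is_sup_of (range (\<lambda>n. mval m (a n))) e)"

definition PiDom :: "('v::lattice \<rightharpoonup> 'e::ordered_ab_group_add) \<Rightarrow> 'v set" where
  "PiDom m = {x. \<exists>a. conv_dec m a \<and> is_inf_of (range a) x}"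

definition SigDom :: "('v::lattice \<rightharpoonup> 'e::ordered_ab_group_add) \<Rightarrow> 'v set" where
  "SigDom m = {x. \<exists>a. conv_inc m a \<and> is_sup_of (range a) x}"

definition is_Pi_ext :: "('v::lattice \<rightharpoonup> 'e::ordered_ab_group_add) \<Rightarrow> ('v \<rightharpoonup> 'e) \<Rightarrow> bool" where
  "is_Pi_ext m p \<longleftrightarrow> dom p = PiDom m \<and> is_valuation_map p \<and>
     (\<forall>a x e. conv_dec m a \<longrightarrow> is_inf_of (range a) x \<longrightarrow>
        is_inf_of (range (\<lambda>n. mval m (a n))) e \<longrightarrow> p x = Some e)"

definition is_Sig_ext :: "('v::lattice \<rightharpoonup> 'e::ordered_ab_group_add) \<Rightarrow> ('v \<rightharpoonup> 'e) \<Rightarrow> bool" where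
  "is_Sig_ext m p \<longleftrightarrow> dom p = SigDom m \<and> is_valuation_map p \<and>
     (\<forall>a x e. conv_inc m a \<longrightarrow> is_sup_of (range a) x \<longrightarrow>
        is_sup_of (range (\<lambda>n. mval m (a n))) e \<longrightarrow> p x = Some e)"

definition Pi_ext :: "('v::lattice \<rightharpoonup> 'e::ordered_ab_group_add) \<Rightarrow> ('v \<rightharpoonup> 'e) option" where
  "Pi_ext m = (if \<exists>p. is_Pi_ext m p then Some (THE p. is_Pi_ext m p) else None)"

definition Sig_ext :: "('v::lattice \<rightharpoonup> 'e::ordered_ab_group_add) \<Rightarrow> ('v \<rightharpoonup> 'e) option" where
  "Sig_ext m = (if \<exists>p. is_Sig_ext m p then Some (THE p. is_Sig_ext m p) else None)"

section \<open>The transfinite hierarchy, indexed by the field of a well-order r\<close>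

definition lt_wo :: "'o rel \<Rightarrow> 'o \<Rightarrow> 'o \<Rightarrow> bool" where
  "lt_wo r b a \<longleftrightarrow> (b, a) \<in> r \<and> b \<noteq> a"

definition is_zero_wo :: "'o rel \<Rightarrow> 'o \<Rightarrow> bool" where
  "is_zero_wo r a \<longleftrightarrow> a \<in> Field r \<and> (\<forall>b\<in>Field r. (a, b) \<in> r)"

definition is_succ_of_wo :: "'o rel \<Rightarrow> 'o \<Rightarrow> 'o \<Rightarrow> bool" where
  "is_succ_of_wo r b a \<longleftrightarrow> lt_wo r b a \<and> \<not> (\<exists>c. lt_wo r b c \<and> lt_wo r c a)"

definition common_ext :: "('v \<rightharpoonup> 'e) set \<Rightarrow> ('v \<rightharpoonup> 'e)" where
  "common_ext M = (\<lambda>x. if \<exists>q\<in>M. x \<in> dom q then (SOME q. q \<in> M \<and> x \<in> dom q) x else None)"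

text \<open>P a = Some (Pi_a phi) if phi is Pi_a-extendible, None otherwise; S likewise for Sigma_a.
  is_hierarchy m r P S says P, S follow the transfinite recursion along the well-order r.\<close>
definition is_hierarchy ::
  "('v::lattice \<rightharpoonup> 'e::ordered_ab_group_add) \<Rightarrow> 'o rel \<Rightarrow>
   ('o \<Rightarrow> ('v \<rightharpoonup> 'e) option) \<Rightarrow> ('o \<Rightarrow> ('v \<rightharpoonup> 'e) option) \<Rightarrow> bool" where
  "is_hierarchy m r P S \<longleftrightarrow>
     (\<forall>a\<in>Field r.
        (is_zero_wo r a \<longrightarrow> P a = Some m \<and> S a = Some m) \<and>
        (\<forall>b. is_succ_of_wo r b a \<longrightarrow>
            P a = Option.bind (S b) Pi_ext \<and> S a = Option.bind (P b) Sig_ext) \<and>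
        (\<not> is_zero_wo r a \<and> \<not> (\<exists>b. is_succ_of_wo r b a) \<longrightarrow>
            P a = (if \<forall>b. lt_wo r b a \<longrightarrow> P b \<noteq> None
                   then Some (common_ext {the (P b) | b. lt_wo r b a}) else None) \<and>
            S a = (if \<forall>b. lt_wo r b a \<longrightarrow> S b \<noteq> None
                   then Some (common_ext {the (S b) | b. lt_wo r b a}) else None)))"

text \<open>The hierarchy of m has collapsed at Q (ordinals represented by well-orders on 'v set).\<close>
definition collapses_at :: "('v::lattice \<rightharpoonup> 'e::ordered_ab_group_add) \<Rightarrow> ('v \<rightharpoonup> 'e) \<Rightarrow> bool" where
  "collapses_at m Q \<longleftrightarrow>
     (\<exists>(r :: 'v set rel) P S a. Well_order r \<and> is_hierarchy m r P S \<and> a \<in> Field r \<and>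
        P a \<noteq> None \<and> S a \<noteq> None \<and>
        Pi_ext (the (S a)) \<noteq> None \<and> Sig_ext (the (P a)) \<noteq> None \<and>
        (Q = the (P a) \<or> Q = the (S a)) \<and>
        Pi_ext Q = Some Q \<and> Sig_ext Q = Some Q)"

definition extendible :: "'v::lattice set \<Rightarrow> ('v \<Rightarrow> 'e::ordered_ab_group_add) \<Rightarrow> bool" where
  "extendible L \<phi> \<longleftrightarrow> (\<exists>Q. collapses_at (to_map L \<phi>) Q)"

definition closure_val :: "'v::lattice set \<Rightarrow> ('v \<Rightarrow> 'e::ordered_ab_group_add) \<Rightarrow> ('v \<rightharpoonup> 'e)" where
  "closure_val L \<phi> = (THE Q. collapses_at (to_map L \<phi>) Q)"

definition extends :: "'v set \<Rightarrow> ('v \<Rightarrow> 'e) \<Rightarrow> 'v set \<Rightarrow> ('v \<Rightarrow> 'e) \<Rightarrow> bool" where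
  "extends C \<psi> L \<phi> \<longleftrightarrow> L \<subseteq> C \<and> (\<forall>a\<in>L. \<psi> a = \<phi> a)"

end

theory Submission
  imports Defs
begin


lemma inf_unique: "is_inf_of S x \<Longrightarrow> is_inf_of S y \<Longrightarrow> x = y"
  unfolding is_inf_of_def by (meson order.antisym)

lemma sup_unique: "is_sup_of S x \<Longrightarrow> is_sup_of S y \<Longrightarrow> x = y"
  unfolding is_sup_of_def by (meson order.antisym)

lemma inf_const: "is_inf_of (range (\<lambda>n. c)) c"
  unfolding is_inf_of_def by auto

lemma sup_const: "is_sup_of (range (\<lambda>n. c)) c"
  unfolding is_sup_of_def by auto

lemma inf_single: "is_inf_of {c} c"
  unfolding is_inf_of_def by auto

lemma sup_single: "is_sup_of {c} c"
  unfolding is_sup_of_def by auto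

lemma Pi_ext_sub: "is_Pi_ext m p \<Longrightarrow> m \<subseteq>\<^sub>m p"
proof (unfold map_le_def, intro ballI)
  fix x assume p: "is_Pi_ext m p" and x: "x \<in> dom m"
  have "conv_dec m (\<lambda>n. x)" unfolding conv_dec_def using x inf_single[of x] inf_single[of "mval m x"]
    by (auto simp: antimono_def)
  then have "p x = Some (mval m x)" using p inf_single[of x] inf_single[of "mval m x"] unfolding is_Pi_ext_def by simp
  then show "m x = p x" using x by (auto simp: mval_def)
qed

lemma Sig_ext_sub: "is_Sig_ext m p \<Longrightarrow> m \<subseteq>\<^sub>m p"
proof (unfold map_le_def, intro ballI)
  fix x assume p: "is_Sig_ext m p" and x: "x \<in> dom m"
  have "conv_inc m (\<lambda>n. x)" unfolding conv_inc_def using x sup_single[of x] sup_single[of "mval m x"]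
    by (auto simp: mono_def)
  then have "p x = Some (mval m x)" using p sup_single[of x] sup_single[of "mval m x"] unfolding is_Sig_ext_def by simp
  then show "m x = p x" using x by (auto simp: mval_def)
qed

lemma Pi_ext_val: "is_Pi_ext m p \<Longrightarrow> conv_dec m a \<Longrightarrow> is_inf_of (range a) x \<Longrightarrow>
   is_inf_of (range (\<lambda>n. mval m (a n))) e \<Longrightarrow> p x = Some e"
  unfolding is_Pi_ext_def by auto

lemma Sig_ext_val: "is_Sig_ext m p \<Longrightarrow> conv_inc m a \<Longrightarrow> is_sup_of (range a) x \<Longrightarrow>
   is_sup_of (range (\<lambda>n. mval m (a n))) e \<Longrightarrow> p x = Some e"
  unfolding is_Sig_ext_def by auto

lemma Pi_ext_uniq: assumes "is_Pi_ext m p" "is_Pi_ext m q" shows "p = q"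
proof
  fix x show "p x = q x"
  proof (cases "x \<in> PiDom m")
    case True
    then obtain a where a: "conv_dec m a" "is_inf_of (range a) x" unfolding PiDom_def by auto
    then obtain e where "is_inf_of (range (\<lambda>n. mval m (a n))) e" unfolding conv_dec_def by auto
    then show ?thesis using Pi_ext_val[OF assms(1) a] Pi_ext_val[OF assms(2) a] by simp
  next
    case False
    then have "x \<notin> dom p" "x \<notin> dom q" using assms unfolding is_Pi_ext_def by auto
    then show ?thesis by (simp add: domIff)
  qed
qed

lemma Sig_ext_uniq: assumes "is_Sig_ext m p" "is_Sig_ext m q" shows "p = q"
proof
  fix x show "p x = q x"
  proof (cases "x \<in> SigDom m")
    case True
    then obtain a where a: "conv_inc m a" "is_sup_of (range a) x" unfolding SigDom_def by auto
    then obtain e where "is_sup_of (range (\<lambda>n. mval m (a n))) e" unfolding conv_inc_def by auto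
    then show ?thesis using Sig_ext_val[OF assms(1) a] Sig_ext_val[OF assms(2) a] by simp
  next
    case False
    then have "x \<notin> dom p" "x \<notin> dom q" using assms unfolding is_Sig_ext_def by auto
    then show ?thesis by (simp add: domIff)
  qed
qed

lemma Pi_ext_Some: "Pi_ext m = Some p \<longleftrightarrow> is_Pi_ext m p"
proof
  assume "Pi_ext m = Some p"
  then have ex: "\<exists>p. is_Pi_ext m p" and "p = (THE p. is_Pi_ext m p)"
    unfolding Pi_ext_def by (auto split: if_splits)
  then show "is_Pi_ext m p" using theI'[of "is_Pi_ext m"] Pi_ext_uniq by blast
next
  assume "is_Pi_ext m p"
  then show "Pi_ext m = Some p" unfolding Pi_ext_def using Pi_ext_uniq
    by (auto intro!: the_equality)
qed

lemma Sig_ext_Some: "Sig_ext m = Some p \<longleftrightarrow> is_Sig_ext m p"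
proof
  assume "Sig_ext m = Some p"
  then have ex: "\<exists>p. is_Sig_ext m p" and "p = (THE p. is_Sig_ext m p)"
    unfolding Sig_ext_def by (auto split: if_splits)
  then show "is_Sig_ext m p" using theI'[of "is_Sig_ext m"] Sig_ext_uniq by blast
next
  assume "is_Sig_ext m p"
  then show "Sig_ext m = Some p" unfolding Sig_ext_def using Sig_ext_uniq
    by (auto intro!: the_equality)
qed

lemma inf_seq_inf:
  fixes a b :: "nat \<Rightarrow> 'v::lattice"
  assumes "is_inf_of (range a) x" "is_inf_of (range b) y"
  shows "is_inf_of (range (\<lambda>n. inf (a n) (b n))) (inf x y)"
proof -
  have "\<forall>w\<in>range (\<lambda>n. inf (a n) (b n)). inf x y \<le> w"
    using assms unfolding is_inf_of_def by (auto simp: le_inf_iff intro: le_infI1 le_infI2)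
  moreover have "z \<le> inf x y" if z: "\<forall>w\<in>range (\<lambda>n. inf (a n) (b n)). z \<le> w" for z
  proof -
    have "\<forall>w\<in>range a. z \<le> w" "\<forall>w\<in>range b. z \<le> w" using z by auto
    then show ?thesis using assms unfolding is_inf_of_def by simp
  qed
  ultimately show ?thesis unfolding is_inf_of_def by blast
qed

lemma sup_seq_sup:
  fixes a b :: "nat \<Rightarrow> 'v::lattice"
  assumes "is_sup_of (range a) x" "is_sup_of (range b) y"
  shows "is_sup_of (range (\<lambda>n. sup (a n) (b n))) (sup x y)"
proof -
  have "\<forall>w\<in>range (\<lambda>n. sup (a n) (b n)). w \<le> sup x y"
    using assms unfolding is_sup_of_def by (auto simp: le_sup_iff intro: le_supI1 le_supI2)
  moreover have "sup x y \<le> z" if z: "\<forall>w\<in>range (\<lambda>n. sup (a n) (b n)). w \<le> z" for z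
  proof -
    have "\<forall>w\<in>range a. w \<le> z" "\<forall>w\<in>range b. w \<le> z" using z by auto
    then show ?thesis using assms unfolding is_sup_of_def by simp
  qed
  ultimately show ?thesis unfolding is_sup_of_def by blast
qed

lemma inf_seq_sup:
  fixes a b :: "nat \<Rightarrow> 'v::lattice"
  assumes sd: "sigma_distributive TYPE('v)" and am: "antimono a" "antimono b"
    and x: "is_inf_of (range a) x" and y: "is_inf_of (range b) y"
  shows "is_inf_of (range (\<lambda>n. sup (a n) (b n))) (sup x y)"
proof -
  have D: "\<And>c (d::nat\<Rightarrow>'v) z. is_inf_of (range d) z \<Longrightarrow> is_inf_of (range (\<lambda>n. sup c (d n))) (sup c z)"
    using sd unfolding sigma_distributive_def by blast
  have lb: "\<forall>w\<in>range (\<lambda>n. sup (a n) (b n)). sup x y \<le> w"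
    using x y unfolding is_inf_of_def by (auto intro: le_supI1 le_supI2)
  moreover have "z \<le> sup x y" if z: "\<forall>w\<in>range (\<lambda>n. sup (a n) (b n)). z \<le> w" for z
  proof -
    have "z \<le> sup y (a k)" for k
    proof -
      have "\<forall>w\<in>range (\<lambda>n. sup (a k) (b n)). z \<le> w"
      proof
        fix w assume "w \<in> range (\<lambda>n. sup (a k) (b n))"
        then obtain n where w: "w = sup (a k) (b n)" by auto
        have "z \<le> sup (a (max k n)) (b (max k n))" using z by auto
        also have "\<dots> \<le> sup (a k) (b n)" using am
          by (intro sup_mono) (auto simp: antimono_def)
        finally show "z \<le> w" using w by simp
      qed
      then have "z \<le> sup (a k) y" using D[OF y, of "a k"] unfolding is_inf_of_def by blast
      then show ?thesis by (simp add: sup_commute)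
    qed
    then have "z \<le> sup y x" using D[OF x, of y] unfolding is_inf_of_def by blast
    then show ?thesis by (simp add: sup_commute)
  qed
  ultimately show ?thesis unfolding is_inf_of_def by blast
qed

lemma sup_seq_inf:
  fixes a b :: "nat \<Rightarrow> 'v::lattice"
  assumes sd: "sigma_distributive TYPE('v)" and am: "mono a" "mono b"
    and x: "is_sup_of (range a) x" and y: "is_sup_of (range b) y"
  shows "is_sup_of (range (\<lambda>n. inf (a n) (b n))) (inf x y)"
proof -
  have D: "\<And>c (d::nat\<Rightarrow>'v) z. is_sup_of (range d) z \<Longrightarrow> is_sup_of (range (\<lambda>n. inf c (d n))) (inf c z)"
    using sd unfolding sigma_distributive_def by blast
  have lb: "\<forall>w\<in>range (\<lambda>n. inf (a n) (b n)). w \<le> inf x y"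
    using x y unfolding is_sup_of_def by (auto intro: le_infI1 le_infI2)
  moreover have "inf x y \<le> z" if z: "\<forall>w\<in>range (\<lambda>n. inf (a n) (b n)). w \<le> z" for z
  proof -
    have "inf y (a k) \<le> z" for k
    proof -
      have "\<forall>w\<in>range (\<lambda>n. inf (a k) (b n)). w \<le> z"
      proof
        fix w assume "w \<in> range (\<lambda>n. inf (a k) (b n))"
        then obtain n where w: "w = inf (a k) (b n)" by auto
        have "inf (a k) (b n) \<le> inf (a (max k n)) (b (max k n))" using am
          by (intro inf_mono) (auto simp: mono_def)
        also have "\<dots> \<le> z" using z by auto
        finally show "w \<le> z" using w by simp
      qed
      then have "inf (a k) y \<le> z" using D[OF y, of "a k"] unfolding is_sup_of_def by blast
      then show ?thesis by (simp add: inf_commute)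
    qed
    then have "inf y x \<le> z" using D[OF x, of y] unfolding is_sup_of_def by blast
    then show ?thesis by (simp add: inf_commute)
  qed
  ultimately show ?thesis unfolding is_sup_of_def by blast
qed

lemma group_inf_add:
  fixes u w :: "nat \<Rightarrow> 'e::ordered_ab_group_add"
  assumes am: "antimono u" "antimono w"
    and x: "is_inf_of (range u) eu" and y: "is_inf_of (range w) ew"
  shows "is_inf_of (range (\<lambda>n. u n + w n)) (eu + ew)"
proof -
  have "\<forall>v\<in>range (\<lambda>n. u n + w n). eu + ew \<le> v"
    using x y unfolding is_inf_of_def by (auto intro!: add_mono)
  moreover have "z \<le> eu + ew" if z: "\<forall>v\<in>range (\<lambda>n. u n + w n). z \<le> v" for z
  proof -
    have "z - ew \<le> u k" for k
    proof -
      have "z - u k \<le> w n" for n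
      proof (cases "k \<le> n")
        case True
        have "z \<le> u n + w n" using z by auto
        also have "\<dots> \<le> u k + w n" using am True by (auto simp: antimono_def)
        finally show ?thesis by (simp add: algebra_simps)
      next
        case False
        have "z \<le> u k + w k" using z by auto
        also have "\<dots> \<le> u k + w n" using am False by (auto simp: antimono_def)
        finally show ?thesis by (simp add: algebra_simps)
      qed
      then have "z - u k \<le> ew" using y unfolding is_inf_of_def by blast
      then show ?thesis by (simp add: algebra_simps)
    qed
    then have "z - ew \<le> eu" using x unfolding is_inf_of_def by blast
    then show ?thesis by (simp add: algebra_simps)
  qed
  ultimately show ?thesis unfolding is_inf_of_def by blast
qed

lemma group_sup_add:
  fixes u w :: "nat \<Rightarrow> 'e::ordered_ab_group_add"
  assumes am: "mono u" "mono w"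
    and x: "is_sup_of (range u) eu" and y: "is_sup_of (range w) ew"
  shows "is_sup_of (range (\<lambda>n. u n + w n)) (eu + ew)"
proof -
  have "\<forall>v\<in>range (\<lambda>n. u n + w n). v \<le> eu + ew"
    using x y unfolding is_sup_of_def by (auto intro!: add_mono)
  moreover have "eu + ew \<le> z" if z: "\<forall>v\<in>range (\<lambda>n. u n + w n). v \<le> z" for z
  proof -
    have "u k \<le> z - ew" for k
    proof -
      have "w n \<le> z - u k" for n
      proof (cases "k \<le> n")
        case True
        have "u k + w n \<le> u n + w n" using am True by (auto simp: mono_def)
        also have "\<dots> \<le> z" using z by auto
        finally show ?thesis by (simp add: algebra_simps)
      next
        case False
        have "u k + w n \<le> u k + w k" using am False by (auto simp: mono_def)
        also have "\<dots> \<le> z" using z by auto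
        finally show ?thesis by (simp add: algebra_simps)
      qed
      then have "ew \<le> z - u k" using y unfolding is_sup_of_def by blast
      then show ?thesis by (simp add: algebra_simps)
    qed
    then have "eu \<le> z - ew" using x unfolding is_sup_of_def by blast
    then show ?thesis by (simp add: algebra_simps)
  qed
  ultimately show ?thesis unfolding is_sup_of_def by blast
qed



lemma conv_dec_le:
  assumes "m \<subseteq>\<^sub>m m'" "conv_dec m a"
  shows "conv_dec m' a" "(\<lambda>n. mval m' (a n)) = (\<lambda>n. mval m (a n))"
proof -
  have d: "\<forall>n. a n \<in> dom m" using assms(2) unfolding conv_dec_def by simp
  then have eq: "(\<lambda>n. mval m' (a n)) = (\<lambda>n. mval m (a n))"
    using assms(1) unfolding map_le_def mval_def by auto
  show "(\<lambda>n. mval m' (a n)) = (\<lambda>n. mval m (a n))" by (rule eq)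
  have "\<forall>n. a n \<in> dom m'" using d map_le_implies_dom_le[OF assms(1)] by auto
  then show "conv_dec m' a" using assms(2) unfolding conv_dec_def eq by simp
qed

lemma conv_inc_le:
  assumes "m \<subseteq>\<^sub>m m'" "conv_inc m a"
  shows "conv_inc m' a" "(\<lambda>n. mval m' (a n)) = (\<lambda>n. mval m (a n))"
proof -
  have d: "\<forall>n. a n \<in> dom m" using assms(2) unfolding conv_inc_def by simp
  then have eq: "(\<lambda>n. mval m' (a n)) = (\<lambda>n. mval m (a n))"
    using assms(1) unfolding map_le_def mval_def by auto
  show "(\<lambda>n. mval m' (a n)) = (\<lambda>n. mval m (a n))" by (rule eq)
  have "\<forall>n. a n \<in> dom m'" using d map_le_implies_dom_le[OF assms(1)] by auto
  then show "conv_inc m' a" using assms(2) unfolding conv_inc_def eq by simp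
qed

lemma valuation_restrict:
  assumes "is_valuation_map p'" "S \<subseteq> dom p'" "sublattice S"
  shows "is_valuation_map (p' |` S)"
proof -
  have dm: "dom (p' |` S) = S" using assms(2) by auto
  have mv: "\<And>x. x \<in> S \<Longrightarrow> mval (p' |` S) x = mval p' x" unfolding mval_def by simp
  have v: "valuation (dom p') (mval p')" using assms(1) unfolding is_valuation_map_def .
  show ?thesis unfolding is_valuation_map_def valuation_def dm
  proof (intro conjI ballI impI)
    show "sublattice S" by fact
  next
    fix a b assume ab: "a \<in> S" "b \<in> S" "a \<le> b"
    have "a \<in> dom p'" "b \<in> dom p'" using ab assms(2) by auto
    then show "mval (p' |` S) a \<le> mval (p' |` S) b"
      using mv ab v unfolding valuation_def by auto
  next
    fix a b assume ab: "a \<in> S" "b \<in> S"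
    then have "inf a b \<in> S" "sup a b \<in> S" using assms(3) unfolding sublattice_def by auto
    then show "mval (p' |` S) (inf a b) + mval (p' |` S) (sup a b) = mval (p' |` S) a + mval (p' |` S) b"
      using ab mv v assms(2) unfolding valuation_def by (simp add: subset_iff)
  qed
qed

lemma PiDom_sublattice:
  fixes m :: "'v::lattice \<rightharpoonup> 'e::ordered_ab_group_add"
  assumes sd: "sigma_distributive TYPE('v)" and rc: "R_complete TYPE('e)"
    and vm: "is_valuation_map m"
  shows "sublattice (PiDom m)"
  unfolding sublattice_def
proof (intro ballI conjI)
  fix x y assume "x \<in> PiDom m" "y \<in> PiDom m"
  then obtain a b where a: "conv_dec m a" "is_inf_of (range a) x" and b: "conv_dec m b" "is_inf_of (range b) y"
    unfolding PiDom_def by auto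
  have v: "sublattice (dom m)" "\<And>u v. u \<in> dom m \<Longrightarrow> v \<in> dom m \<Longrightarrow> u \<le> v \<Longrightarrow> mval m u \<le> mval m v"
     "\<And>u v. u \<in> dom m \<Longrightarrow> v \<in> dom m \<Longrightarrow> mval m (inf u v) + mval m (sup u v) = mval m u + mval m v"
    using vm unfolding is_valuation_map_def valuation_def by auto
  have ad: "\<And>n. a n \<in> dom m" and bd: "\<And>n. b n \<in> dom m" and am: "antimono a" and bm: "antimono b"
    using a b unfolding conv_dec_def by auto
  obtain ea eb where ea: "is_inf_of (range (\<lambda>n. mval m (a n))) ea" and eb: "is_inf_of (range (\<lambda>n. mval m (b n))) eb"
    using a b unfolding conv_dec_def by auto
  have id: "\<And>n. inf (a n) (b n) \<in> dom m" and sd': "\<And>n. sup (a n) (b n) \<in> dom m"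
    using v(1) ad bd unfolding sublattice_def by auto
  have fam: "antimono (\<lambda>n. mval m (a n))" using am ad v(2) unfolding antimono_def by auto
  have gam: "antimono (\<lambda>n. mval m (b n))" using bm bd v(2) unfolding antimono_def by auto
  have iam: "antimono (\<lambda>n. inf (a n) (b n))" using am bm unfolding antimono_def by (auto simp: le_inf_iff intro: le_infI1 le_infI2)
  have sam: "antimono (\<lambda>n. sup (a n) (b n))" using am bm unfolding antimono_def by (auto simp: le_sup_iff intro: le_supI1 le_supI2)
  have Xam: "antimono (\<lambda>n. mval m (inf (a n) (b n)))" using iam id v(2) unfolding antimono_def by auto
  have Yam: "antimono (\<lambda>n. mval m (sup (a n) (b n)))" using sam sd' v(2) unfolding antimono_def by auto
  have sum: "(\<lambda>n. mval m (inf (a n) (b n)) + mval m (sup (a n) (b n))) = (\<lambda>n. mval m (a n) + mval m (b n))"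
    using v(3) ad bd by auto
  have "is_inf_of (range (\<lambda>n. mval m (a n) + mval m (b n))) (ea + eb)"
    by (rule group_inf_add[OF fam gam ea eb])
  then have "\<exists>z. is_inf_of (range (\<lambda>n. mval m (inf (a n) (b n)) + mval m (sup (a n) (b n)))) z"
    unfolding sum by blast
  then have ex: "(\<exists>u. is_inf_of (range (\<lambda>n. mval m (inf (a n) (b n)))) u) \<and> (\<exists>u. is_inf_of (range (\<lambda>n. mval m (sup (a n) (b n)))) u)"
    using rc Xam Yam unfolding R_complete_def by blast
  have "conv_dec m (\<lambda>n. inf (a n) (b n))" unfolding conv_dec_def
    using id iam ex inf_seq_inf[OF a(2) b(2)] by blast
  then show "inf x y \<in> PiDom m" unfolding PiDom_def using inf_seq_inf[OF a(2) b(2)] by blast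
  have "conv_dec m (\<lambda>n. sup (a n) (b n))" unfolding conv_dec_def
    using sd' sam ex inf_seq_sup[OF sd am bm a(2) b(2)] by blast
  then show "sup x y \<in> PiDom m" unfolding PiDom_def using inf_seq_sup[OF sd am bm a(2) b(2)] by blast
qed

lemma SigDom_sublattice:
  fixes m :: "'v::lattice \<rightharpoonup> 'e::ordered_ab_group_add"
  assumes sd: "sigma_distributive TYPE('v)" and rc: "R_complete TYPE('e)"
    and vm: "is_valuation_map m"
  shows "sublattice (SigDom m)"
  unfolding sublattice_def
proof (intro ballI conjI)
  fix x y assume "x \<in> SigDom m" "y \<in> SigDom m"
  then obtain a b where a: "conv_inc m a" "is_sup_of (range a) x" and b: "conv_inc m b" "is_sup_of (range b) y"
    unfolding SigDom_def by auto
  have v: "sublattice (dom m)" "\<And>u v. u \<in> dom m \<Longrightarrow> v \<in> dom m \<Longrightarrow> u \<le> v \<Longrightarrow> mval m u \<le> mval m v"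
     "\<And>u v. u \<in> dom m \<Longrightarrow> v \<in> dom m \<Longrightarrow> mval m (inf u v) + mval m (sup u v) = mval m u + mval m v"
    using vm unfolding is_valuation_map_def valuation_def by auto
  have ad: "\<And>n. a n \<in> dom m" and bd: "\<And>n. b n \<in> dom m" and am: "mono a" and bm: "mono b"
    using a b unfolding conv_inc_def by auto
  obtain ea eb where ea: "is_sup_of (range (\<lambda>n. mval m (a n))) ea" and eb: "is_sup_of (range (\<lambda>n. mval m (b n))) eb"
    using a b unfolding conv_inc_def by auto
  have id: "\<And>n. inf (a n) (b n) \<in> dom m" and sd': "\<And>n. sup (a n) (b n) \<in> dom m"
    using v(1) ad bd unfolding sublattice_def by auto
  have fam: "mono (\<lambda>n. mval m (a n))" using am ad v(2) unfolding mono_def by auto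
  have gam: "mono (\<lambda>n. mval m (b n))" using bm bd v(2) unfolding mono_def by auto
  have iam: "mono (\<lambda>n. inf (a n) (b n))" using am bm unfolding mono_def by (auto simp: le_inf_iff intro: le_infI1 le_infI2)
  have sam: "mono (\<lambda>n. sup (a n) (b n))" using am bm unfolding mono_def by (auto simp: le_sup_iff intro: le_supI1 le_supI2)
  have Xam: "mono (\<lambda>n. mval m (inf (a n) (b n)))" using iam id v(2) unfolding mono_def by auto
  have Yam: "mono (\<lambda>n. mval m (sup (a n) (b n)))" using sam sd' v(2) unfolding mono_def by auto
  have sum: "(\<lambda>n. mval m (inf (a n) (b n)) + mval m (sup (a n) (b n))) = (\<lambda>n. mval m (a n) + mval m (b n))"
    using v(3) ad bd by auto
  have "is_sup_of (range (\<lambda>n. mval m (a n) + mval m (b n))) (ea + eb)"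
    by (rule group_sup_add[OF fam gam ea eb])
  then have "\<exists>z. is_sup_of (range (\<lambda>n. mval m (inf (a n) (b n)) + mval m (sup (a n) (b n)))) z"
    unfolding sum by blast
  then have ex: "(\<exists>u. is_sup_of (range (\<lambda>n. mval m (inf (a n) (b n)))) u) \<and> (\<exists>u. is_sup_of (range (\<lambda>n. mval m (sup (a n) (b n)))) u)"
    using rc Xam Yam unfolding R_complete_def by blast
  have "conv_inc m (\<lambda>n. sup (a n) (b n))" unfolding conv_inc_def
    using sd' sam ex sup_seq_sup[OF a(2) b(2)] by blast
  then show "sup x y \<in> SigDom m" unfolding SigDom_def using sup_seq_sup[OF a(2) b(2)] by blast
  have "conv_inc m (\<lambda>n. inf (a n) (b n))" unfolding conv_inc_def
    using id iam ex sup_seq_inf[OF sd am bm a(2) b(2)] by blast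
  then show "inf x y \<in> SigDom m" unfolding SigDom_def using sup_seq_inf[OF sd am bm a(2) b(2)] by blast
qed

lemma Pi_mono:
  fixes m m' :: "'v::lattice \<rightharpoonup> 'e::ordered_ab_group_add"
  assumes sd: "sigma_distributive TYPE('v)" and rc: "R_complete TYPE('e)"
    and vm: "is_valuation_map m" and le: "m \<subseteq>\<^sub>m m'" and pe: "Pi_ext m' = Some p'"
  shows "\<exists>p. Pi_ext m = Some p \<and> p \<subseteq>\<^sub>m p'"
proof -
  have P': "is_Pi_ext m' p'" using pe Pi_ext_Some by blast
  define p where "p = p' |` PiDom m"
  have sub: "PiDom m \<subseteq> PiDom m'" unfolding PiDom_def using conv_dec_le[OF le] by blast
  have dp': "dom p' = PiDom m'" using P' unfolding is_Pi_ext_def by simp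
  have domp: "dom p = PiDom m" unfolding p_def using sub dp' by auto
  have "is_valuation_map p" unfolding p_def
    using valuation_restrict[of p' "PiDom m"] P' sub dp' PiDom_sublattice[OF sd rc vm]
    unfolding is_Pi_ext_def by simp
  moreover have "p x = Some e" if a: "conv_dec m a" "is_inf_of (range a) x"
      "is_inf_of (range (\<lambda>n. mval m (a n))) e" for a x e
  proof -
    have "x \<in> PiDom m" unfolding PiDom_def using a by blast
    then have "p x = p' x" unfolding p_def by simp
    moreover have "p' x = Some e"
      apply (rule Pi_ext_val[OF P' conv_dec_le(1)[OF le a(1)] a(2)])
      unfolding conv_dec_le(2)[OF le a(1)] by (rule a(3))
    ultimately show ?thesis by simp
  qed
  ultimately have "is_Pi_ext m p" unfolding is_Pi_ext_def using domp by blast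
  moreover have "p \<subseteq>\<^sub>m p'" unfolding p_def map_le_def by auto
  ultimately show ?thesis using Pi_ext_Some by blast
qed

lemma Sig_mono:
  fixes m m' :: "'v::lattice \<rightharpoonup> 'e::ordered_ab_group_add"
  assumes sd: "sigma_distributive TYPE('v)" and rc: "R_complete TYPE('e)"
    and vm: "is_valuation_map m" and le: "m \<subseteq>\<^sub>m m'" and pe: "Sig_ext m' = Some p'"
  shows "\<exists>p. Sig_ext m = Some p \<and> p \<subseteq>\<^sub>m p'"
proof -
  have P': "is_Sig_ext m' p'" using pe Sig_ext_Some by blast
  define p where "p = p' |` SigDom m"
  have sub: "SigDom m \<subseteq> SigDom m'" unfolding SigDom_def using conv_inc_le[OF le] by blast
  have dp': "dom p' = SigDom m'" using P' unfolding is_Sig_ext_def by simp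
  have domp: "dom p = SigDom m" unfolding p_def using sub dp' by auto
  have "is_valuation_map p" unfolding p_def
    using valuation_restrict[of p' "SigDom m"] P' sub dp' SigDom_sublattice[OF sd rc vm]
    unfolding is_Sig_ext_def by simp
  moreover have "p x = Some e" if a: "conv_inc m a" "is_sup_of (range a) x"
      "is_sup_of (range (\<lambda>n. mval m (a n))) e" for a x e
  proof -
    have "x \<in> SigDom m" unfolding SigDom_def using a by blast
    then have "p x = p' x" unfolding p_def by simp
    moreover have "p' x = Some e"
      apply (rule Sig_ext_val[OF P' conv_inc_le(1)[OF le a(1)] a(2)])
      unfolding conv_inc_le(2)[OF le a(1)] by (rule a(3))
    ultimately show ?thesis by simp
  qed
  ultimately have "is_Sig_ext m p" unfolding is_Sig_ext_def using domp by blast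
  moreover have "p \<subseteq>\<^sub>m p'" unfolding p_def map_le_def by auto
  ultimately show ?thesis using Sig_ext_Some by blast
qed



section \<open>Well-orders\<close>

lemma wo_facts:
  assumes "Well_order r"
  shows "trans r" "antisym r" "\<forall>a\<in>Field r. \<forall>b\<in>Field r. (a,b) \<in> r \<or> (b,a) \<in> r"
    "wf (r - Id)" "\<forall>a\<in>Field r. (a,a) \<in> r"
  using wo_rel.TRANS[of r] wo_rel.ANTISYM[of r] wo_rel.TOTALS[of r] wo_rel.WF[of r]
    wo_rel.REFL[of r] assms unfolding wo_rel_def refl_on_def by auto

lemma wo_lt_field: "lt_wo r b a \<Longrightarrow> b \<in> Field r \<and> a \<in> Field r"
  unfolding lt_wo_def by (auto intro: FieldI1 FieldI2)

lemma wo_lt_trans: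
  assumes W: "Well_order r" and "lt_wo r b c" "lt_wo r c d"
  shows "lt_wo r b d"
proof -
  have "(b,d) \<in> r" using assms wo_facts(1)[OF W] unfolding lt_wo_def trans_def by blast
  moreover have "b \<noteq> d"
  proof
    assume "b = d"
    then have "(b,c) \<in> r" "(c,b) \<in> r" using assms unfolding lt_wo_def by auto
    then have "b = c" using wo_facts(2)[OF W] unfolding antisym_def by blast
    then show False using assms unfolding lt_wo_def by auto
  qed
  ultimately show ?thesis unfolding lt_wo_def by simp
qed

lemma wo_lt_total:
  assumes W: "Well_order r" and "a \<in> Field r" "b \<in> Field r"
  shows "a = b \<or> lt_wo r a b \<or> lt_wo r b a"
  using wo_facts(3)[OF W] assms unfolding lt_wo_def by blast

lemma wo_lt_asym:
  assumes W: "Well_order r" and "lt_wo r a b"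
  shows "\<not> lt_wo r b a"
  using wo_facts(2)[OF W] assms unfolding lt_wo_def antisym_def by blast

lemma wo_wf:
  assumes W: "Well_order r"
  shows "wf {(b,a). lt_wo r b a}"
proof -
  have "{(b,a). lt_wo r b a} = r - Id" unfolding lt_wo_def by auto
  then show ?thesis using wo_facts(4)[OF W] by simp
qed

lemma wo_zero_nolt:
  assumes W: "Well_order r" and "is_zero_wo r a"
  shows "\<not> lt_wo r b a"
proof
  assume l: "lt_wo r b a"
  then have "b \<in> Field r" using wo_lt_field[OF l] by blast
  then have "(a,b) \<in> r" using assms unfolding is_zero_wo_def by blast
  then show False using l wo_facts(2)[OF W] unfolding lt_wo_def antisym_def by blast
qed

lemma wo_exists_lt:
  assumes W: "Well_order r" and a: "a \<in> Field r" and nz: "\<not> is_zero_wo r a"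
  shows "\<exists>b. lt_wo r b a"
proof -
  obtain z where z: "z \<in> Field r" and zmin: "\<And>y. (y, z) \<in> r - Id \<Longrightarrow> y \<notin> Field r"
    using wfE_min[OF wo_facts(4)[OF W] a] by metis
  have zb: "(z,b) \<in> r" if b: "b \<in> Field r" for b
  proof (cases "b = z")
    case True
    then show ?thesis using wo_facts(5)[OF W] z by simp
  next
    case False
    have "(z,b) \<in> r \<or> (b,z) \<in> r" using wo_facts(3)[OF W] z b by simp
    moreover have "(b,z) \<notin> r" using zmin[of b] False b by auto
    ultimately show ?thesis by simp
  qed
  then have zz: "is_zero_wo r z" unfolding is_zero_wo_def using z by simp
  then have "z \<noteq> a" using nz by auto
  moreover have "(z,a) \<in> r" using zb a by simp
  ultimately show ?thesis unfolding lt_wo_def by auto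
qed

lemma wo_succ_lt:
  assumes W: "Well_order r" and s: "is_succ_of_wo r b a" and c: "lt_wo r c a"
  shows "c = b \<or> lt_wo r c b"
proof -
  have "b \<in> Field r" "c \<in> Field r" using s c wo_lt_field[of r b a] wo_lt_field[of r c a] unfolding is_succ_of_wo_def by auto
  then have "c = b \<or> lt_wo r c b \<or> lt_wo r b c" using wo_lt_total[OF W] by blast
  then show ?thesis using s c unfolding is_succ_of_wo_def by blast
qed

lemma wo_succ_uniq:
  assumes W: "Well_order r" and "is_succ_of_wo r b a" "is_succ_of_wo r b' a"
  shows "b = b'"
  using wo_succ_lt[OF W assms(2), of b'] wo_succ_lt[OF W assms(3), of b] assms(2,3) wo_lt_asym[OF W]
  unfolding is_succ_of_wo_def by blast

lemma wo_succ_le: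
  assumes W: "Well_order r" and s: "is_succ_of_wo r c s" and d: "lt_wo r c d"
  shows "s = d \<or> lt_wo r s d"
proof -
  have "s \<in> Field r" "d \<in> Field r" using s d wo_lt_field[of r c s] wo_lt_field[of r c d] unfolding is_succ_of_wo_def by auto
  then have "s = d \<or> lt_wo r s d \<or> lt_wo r d s" using wo_lt_total[OF W] by blast
  then show ?thesis using s d unfolding is_succ_of_wo_def by blast
qed

lemma hier_at:
  assumes "is_hierarchy m r P S" "a \<in> Field r"
  shows "(is_zero_wo r a \<longrightarrow> P a = Some m \<and> S a = Some m) \<and>
        (\<forall>b. is_succ_of_wo r b a \<longrightarrow>
            P a = Option.bind (S b) Pi_ext \<and> S a = Option.bind (P b) Sig_ext) \<and>
        (\<not> is_zero_wo r a \<and> \<not> (\<exists>b. is_succ_of_wo r b a) \<longrightarrow>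
            P a = (if \<forall>b. lt_wo r b a \<longrightarrow> P b \<noteq> None
                   then Some (common_ext {the (P b) | b. lt_wo r b a}) else None) \<and>
            S a = (if \<forall>b. lt_wo r b a \<longrightarrow> S b \<noteq> None
                   then Some (common_ext {the (S b) | b. lt_wo r b a}) else None))"
  using assms(1) unfolding is_hierarchy_def using assms(2) by (rule bspec)

lemma hier_zero:
  "is_hierarchy m r P S \<Longrightarrow> a \<in> Field r \<Longrightarrow> is_zero_wo r a \<Longrightarrow> P a = Some m \<and> S a = Some m"
  using hier_at by (metis (no_types, lifting))

lemma hier_succ:
  assumes "is_hierarchy m r P S" "is_succ_of_wo r b a"
  shows "P a = Option.bind (S b) Pi_ext \<and> S a = Option.bind (P b) Sig_ext"
proof -
  have "a \<in> Field r" using assms(2) wo_lt_field[of r b a] unfolding is_succ_of_wo_def by simp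
  then have "\<forall>b. is_succ_of_wo r b a \<longrightarrow>
            P a = Option.bind (S b) Pi_ext \<and> S a = Option.bind (P b) Sig_ext"
    using hier_at[OF assms(1)] by (metis (no_types, lifting))
  then show ?thesis using assms(2) by simp
qed

lemma hier_lim:
  assumes "is_hierarchy m r P S" "a \<in> Field r" "\<not> is_zero_wo r a" "\<not> (\<exists>b. is_succ_of_wo r b a)"
  shows "P a = (if \<forall>b. lt_wo r b a \<longrightarrow> P b \<noteq> None
                   then Some (common_ext {the (P b) | b. lt_wo r b a}) else None) \<and>
    S a = (if \<forall>b. lt_wo r b a \<longrightarrow> S b \<noteq> None
                   then Some (common_ext {the (S b) | b. lt_wo r b a}) else None)"
proof -
  have "\<not> is_zero_wo r a \<and> \<not> (\<exists>b. is_succ_of_wo r b a) \<longrightarrow>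
            P a = (if \<forall>b. lt_wo r b a \<longrightarrow> P b \<noteq> None
                   then Some (common_ext {the (P b) | b. lt_wo r b a}) else None) \<and>
            S a = (if \<forall>b. lt_wo r b a \<longrightarrow> S b \<noteq> None
                   then Some (common_ext {the (S b) | b. lt_wo r b a}) else None)"
    using hier_at[OF assms(1,2)] by (rule conjunct2[THEN conjunct2])
  then show ?thesis using assms(3,4) by (rule mp[OF _ conjI])
qed

section \<open>Common extensions\<close>

lemma ce_some:
  assumes "q \<in> M" "x \<in> dom q"
  shows "common_ext M x = (SOME q. q \<in> M \<and> x \<in> dom q) x"
    "(SOME q. q \<in> M \<and> x \<in> dom q) \<in> M" "x \<in> dom (SOME q. q \<in> M \<and> x \<in> dom q)"
proof -
  have "\<exists>q\<in>M. x \<in> dom q" using assms by blast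
  then show "common_ext M x = (SOME q. q \<in> M \<and> x \<in> dom q) x" unfolding common_ext_def by simp
  have "(SOME q. q \<in> M \<and> x \<in> dom q) \<in> M \<and> x \<in> dom (SOME q. q \<in> M \<and> x \<in> dom q)"
    by (rule someI[of "\<lambda>q. q \<in> M \<and> x \<in> dom q" q]) (use assms in simp)
  then show "(SOME q. q \<in> M \<and> x \<in> dom q) \<in> M" "x \<in> dom (SOME q. q \<in> M \<and> x \<in> dom q)" by simp_all
qed

lemma ce_none:
  assumes "\<not> (\<exists>q\<in>M. x \<in> dom q)"
  shows "common_ext M x = None"
  using assms unfolding common_ext_def by simp

lemma ce_dom: "dom (common_ext M) = (\<Union>q\<in>M. dom q)"
proof (rule set_eqI)
  fix x
  show "x \<in> dom (common_ext M) \<longleftrightarrow> x \<in> (\<Union>q\<in>M. dom q)"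
  proof (cases "\<exists>q\<in>M. x \<in> dom q")
    case True
    then obtain q where q: "q \<in> M" "x \<in> dom q" by blast
    then have "x \<in> dom (common_ext M)" using ce_some[OF q] by (simp add: domIff)
    then show ?thesis using q by blast
  next
    case False
    then show ?thesis using ce_none[OF False] by (simp add: domIff)
  qed
qed

lemma ce_le:
  assumes "\<forall>q\<in>M. q \<subseteq>\<^sub>m F"
  shows "common_ext M \<subseteq>\<^sub>m F"
  unfolding map_le_def
proof
  fix x assume x: "x \<in> dom (common_ext M)"
  have "x \<in> (\<Union>q\<in>M. dom q)" using x by (simp only: ce_dom)
  then obtain q where q: "q \<in> M" "x \<in> dom q" by (rule UN_E)
  note qs = ce_some[OF q]
  define q' where "q' = (SOME q. q \<in> M \<and> x \<in> dom q)"
  have q'1: "q' \<in> M" "x \<in> dom q'" using qs(2,3) unfolding q'_def by simp_all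
  have "q' \<subseteq>\<^sub>m F" using assms q'1(1) by simp
  then have "q' x = F x" using q'1(2) unfolding map_le_def by simp
  moreover have "common_ext M x = q' x" using qs(1) unfolding q'_def by simp
  ultimately show "common_ext M x = F x" by simp
qed

definition chain_m :: "('v \<rightharpoonup> 'e) set \<Rightarrow> bool" where
  "chain_m M \<longleftrightarrow> (\<forall>q1\<in>M. \<forall>q2\<in>M. q1 \<subseteq>\<^sub>m q2 \<or> q2 \<subseteq>\<^sub>m q1)"

lemma chain_same: "chain_m M \<Longrightarrow> q1 \<in> M \<Longrightarrow> q2 \<in> M \<Longrightarrow> x \<in> dom q1 \<Longrightarrow> x \<in> dom q2 \<Longrightarrow> q1 x = q2 x"
proof -
  assume c: "chain_m M" "q1 \<in> M" "q2 \<in> M" "x \<in> dom q1" "x \<in> dom q2"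
  then have "q1 \<subseteq>\<^sub>m q2 \<or> q2 \<subseteq>\<^sub>m q1" unfolding chain_m_def by simp
  then show "q1 x = q2 x"
  proof
    assume "q1 \<subseteq>\<^sub>m q2" then show ?thesis using c(4) unfolding map_le_def by simp
  next
    assume "q2 \<subseteq>\<^sub>m q1" then show ?thesis using c(5) unfolding map_le_def by simp
  qed
qed

lemma ce_ge:
  assumes "q \<in> M" "chain_m M"
  shows "q \<subseteq>\<^sub>m common_ext M"
  unfolding map_le_def
proof
  fix x assume x: "x \<in> dom q"
  note qs = ce_some[OF assms(1) x]
  show "q x = common_ext M x" unfolding qs(1) using chain_same[OF assms(2) assms(1) qs(2) x qs(3)] .
qed

lemma ce_val:
  fixes M :: "('v::lattice \<rightharpoonup> 'e::ordered_ab_group_add) set"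
  assumes ch: "chain_m M" and vals: "\<forall>q\<in>M. is_valuation_map q"
  shows "is_valuation_map (common_ext M)"
proof -
  let ?c = "common_ext M"
  have two: "\<exists>q\<in>M. x \<in> dom q \<and> y \<in> dom q" if xy: "x \<in> dom ?c" "y \<in> dom ?c" for x y
  proof -
    have "x \<in> (\<Union>q\<in>M. dom q)" "y \<in> (\<Union>q\<in>M. dom q)" using xy by (simp_all only: ce_dom)
    then obtain q1 q2 where q: "q1 \<in> M" "x \<in> dom q1" "q2 \<in> M" "y \<in> dom q2" by blast
    then have "q1 \<subseteq>\<^sub>m q2 \<or> q2 \<subseteq>\<^sub>m q1" using ch unfolding chain_m_def by simp
    then show ?thesis
    proof
      assume "q1 \<subseteq>\<^sub>m q2"
      then have "x \<in> dom q2" using q(2) map_le_implies_dom_le by blast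
      then show ?thesis using q(3,4) by blast
    next
      assume "q2 \<subseteq>\<^sub>m q1"
      then have "y \<in> dom q1" using q(4) map_le_implies_dom_le by blast
      then show ?thesis using q(1,2) by blast
    qed
  qed
  have mv: "mval ?c z = mval q z" if "q \<in> M" "z \<in> dom q" for q z
  proof -
    have "q z = ?c z" using ce_ge[OF that(1) ch] that(2) unfolding map_le_def by simp
    then show ?thesis unfolding mval_def by simp
  qed
  have qd: "dom q \<subseteq> dom ?c" if "q \<in> M" for q using that by (simp add: ce_dom) blast
  have sl: "inf x y \<in> dom ?c \<and> sup x y \<in> dom ?c" if xy: "x \<in> dom ?c" "y \<in> dom ?c" for x y
  proof -
    obtain q where q: "q \<in> M" "x \<in> dom q" "y \<in> dom q" using two[OF xy] by blast
    have vq: "sublattice (dom q)" using vals q(1) unfolding is_valuation_map_def valuation_def by simp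
    then have "inf x y \<in> dom q" "sup x y \<in> dom q" using q unfolding sublattice_def by simp_all
    then show ?thesis using qd[OF q(1)] by blast
  qed
  have mo: "mval ?c x \<le> mval ?c y" if xy: "x \<in> dom ?c" "y \<in> dom ?c" "x \<le> y" for x y
  proof -
    obtain q where q: "q \<in> M" "x \<in> dom q" "y \<in> dom q" using two[OF xy(1,2)] by blast
    have "\<forall>a\<in>dom q. \<forall>b\<in>dom q. a \<le> b \<longrightarrow> mval q a \<le> mval q b"
      using vals q(1) unfolding is_valuation_map_def valuation_def by simp
    then have "mval q x \<le> mval q y" using q xy(3) by simp
    then show ?thesis using mv[OF q(1) q(2)] mv[OF q(1) q(3)] by simp
  qed
  have md: "mval ?c (inf x y) + mval ?c (sup x y) = mval ?c x + mval ?c y" if xy: "x \<in> dom ?c" "y \<in> dom ?c" for x y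
  proof -
    obtain q where q: "q \<in> M" "x \<in> dom q" "y \<in> dom q" using two[OF xy(1,2)] by blast
    have vq: "sublattice (dom q)" "\<forall>a\<in>dom q. \<forall>b\<in>dom q. mval q (inf a b) + mval q (sup a b) = mval q a + mval q b"
      using vals q(1) unfolding is_valuation_map_def valuation_def by simp_all
    then have iq: "inf x y \<in> dom q" "sup x y \<in> dom q" using q unfolding sublattice_def by simp_all
    have "mval q (inf x y) + mval q (sup x y) = mval q x + mval q y" using vq(2) q by simp
    then show ?thesis using mv[OF q(1) q(2)] mv[OF q(1) q(3)] mv[OF q(1) iq(1)] mv[OF q(1) iq(2)] by simp
  qed
  show ?thesis unfolding is_valuation_map_def valuation_def sublattice_def
    using sl mo md by blast
qed



definition good :: "('v::lattice \<rightharpoonup> 'e::ordered_ab_group_add) \<Rightarrow> 'o rel \<Rightarrow>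
   ('o \<Rightarrow> ('v \<rightharpoonup> 'e) option) \<Rightarrow> ('o \<Rightarrow> ('v \<rightharpoonup> 'e) option) \<Rightarrow> 'o \<Rightarrow> bool" where
  "good m r P S c \<longleftrightarrow> (\<exists>pc sc. P c = Some pc \<and> S c = Some sc \<and> is_valuation_map pc \<and> is_valuation_map sc
     \<and> m \<subseteq>\<^sub>m pc \<and> m \<subseteq>\<^sub>m sc \<and>
     (\<forall>b. lt_wo r b c \<longrightarrow> (\<exists>pb sb. P b = Some pb \<and> S b = Some sb \<and>
         pb \<subseteq>\<^sub>m pc \<and> pb \<subseteq>\<^sub>m sc \<and> sb \<subseteq>\<^sub>m pc \<and> sb \<subseteq>\<^sub>m sc)))"

lemma good_self:
  assumes "good m r P S c" "P c = Some pc" "S c = Some sc"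
  shows "is_valuation_map pc" "is_valuation_map sc" "m \<subseteq>\<^sub>m pc" "m \<subseteq>\<^sub>m sc"
  using assms unfolding good_def by auto

lemma good_ex:
  assumes "good m r P S c" "lt_wo r b c"
  shows "\<exists>pb sb. P b = Some pb \<and> S b = Some sb"
proof -
  obtain pc sc where "\<forall>b. lt_wo r b c \<longrightarrow> (\<exists>pb sb. P b = Some pb \<and> S b = Some sb \<and>
         pb \<subseteq>\<^sub>m pc \<and> pb \<subseteq>\<^sub>m sc \<and> sb \<subseteq>\<^sub>m pc \<and> sb \<subseteq>\<^sub>m sc)"
    using assms(1) unfolding good_def by blast
  then show ?thesis using assms(2) by blast
qed

lemma good_below:
  assumes "good m r P S c" "P c = Some pc" "S c = Some sc" "lt_wo r b c" "P b = Some pb" "S b = Some sb"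
  shows "pb \<subseteq>\<^sub>m pc" "pb \<subseteq>\<^sub>m sc" "sb \<subseteq>\<^sub>m pc" "sb \<subseteq>\<^sub>m sc"
proof -
  have "\<forall>b. lt_wo r b c \<longrightarrow> (\<exists>pb sb. P b = Some pb \<and> S b = Some sb \<and>
         pb \<subseteq>\<^sub>m pc \<and> pb \<subseteq>\<^sub>m sc \<and> sb \<subseteq>\<^sub>m pc \<and> sb \<subseteq>\<^sub>m sc)"
    using assms(1-3) unfolding good_def by auto
  then have "\<exists>pb' sb'. P b = Some pb' \<and> S b = Some sb' \<and>
         pb' \<subseteq>\<^sub>m pc \<and> pb' \<subseteq>\<^sub>m sc \<and> sb' \<subseteq>\<^sub>m pc \<and> sb' \<subseteq>\<^sub>m sc" using assms(4) by blast
  then show "pb \<subseteq>\<^sub>m pc" "pb \<subseteq>\<^sub>m sc" "sb \<subseteq>\<^sub>m pc" "sb \<subseteq>\<^sub>m sc" using assms(5,6) by auto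
qed

lemma good_below':
  assumes "good m r P S c" "P c = Some pc" "S c = Some sc" "lt_wo r b c"
  shows "\<exists>pb sb. P b = Some pb \<and> S b = Some sb \<and> pb \<subseteq>\<^sub>m pc \<and> pb \<subseteq>\<^sub>m sc \<and> sb \<subseteq>\<^sub>m pc \<and> sb \<subseteq>\<^sub>m sc"
  using good_ex[OF assms(1,4)] good_below[OF assms] by blast

lemma hier_inv:
  fixes m :: "'v::lattice \<rightharpoonup> 'e::ordered_ab_group_add" and r :: "'o rel"
  assumes sd: "sigma_distributive TYPE('v)" and rc: "R_complete TYPE('e)"
    and vm: "is_valuation_map m" and W: "Well_order r" and H: "is_hierarchy m r P S"
  shows "\<forall>c. c \<in> Field r \<longrightarrow> P c \<noteq> None \<longrightarrow> S c \<noteq> None \<longrightarrow> good m r P S c"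
proof
  fix c0
  show "c0 \<in> Field r \<longrightarrow> P c0 \<noteq> None \<longrightarrow> S c0 \<noteq> None \<longrightarrow> good m r P S c0"
  proof (induct c0 rule: wf_induct[OF wo_wf[OF W]])
    fix c
    assume IH0: "\<forall>y. (y, c) \<in> {(b,a). lt_wo r b a} \<longrightarrow>
       (y \<in> Field r \<longrightarrow> P y \<noteq> None \<longrightarrow> S y \<noteq> None \<longrightarrow> good m r P S y)"
    have IH: "good m r P S b" if "lt_wo r b c" "P b \<noteq> None" "S b \<noteq> None" for b
    proof -
      have "b \<in> Field r" using wo_lt_field[OF that(1)] by simp
      then show ?thesis using IH0 that by simp
    qed
    show "c \<in> Field r \<longrightarrow> P c \<noteq> None \<longrightarrow> S c \<noteq> None \<longrightarrow> good m r P S c"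
    proof (intro impI)
      assume c: "c \<in> Field r" "P c \<noteq> None" "S c \<noteq> None"
      obtain pc where pc: "P c = Some pc" using c(2) by auto
      obtain sc where sc: "S c = Some sc" using c(3) by auto
      consider (z) "is_zero_wo r c" | (s) d where "is_succ_of_wo r d c"
        | (l) "\<not> is_zero_wo r c" "\<not> (\<exists>d. is_succ_of_wo r d c)" by blast
      then show "good m r P S c"
      proof cases
        case z
        have "P c = Some m" "S c = Some m" using hier_zero[OF H c(1) z] by simp_all
        moreover have "\<not> lt_wo r b c" for b using wo_zero_nolt[OF W z] by simp
        ultimately show ?thesis unfolding good_def using vm by simp
      next
        case s
        have ld: "lt_wo r d c" using s unfolding is_succ_of_wo_def by simp
        have dF: "d \<in> Field r" using wo_lt_field[OF ld] by simp
        have hs: "P c = Option.bind (S d) Pi_ext" "S c = Option.bind (P d) Sig_ext"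
          using hier_succ[OF H s] by simp_all
        obtain sd0 where sd0: "S d = Some sd0" and pe: "Pi_ext sd0 = Some pc"
          using hs(1) pc by (cases "S d") auto
        obtain pd0 where pd0: "P d = Some pd0" and se: "Sig_ext pd0 = Some sc"
          using hs(2) sc by (cases "P d") auto
        have gd: "good m r P S d" using IH[OF ld] pd0 sd0 by simp
        note gds = good_self[OF gd pd0 sd0]
        have ipc: "is_Pi_ext sd0 pc" using pe Pi_ext_Some by blast
        have isc: "is_Sig_ext pd0 sc" using se Sig_ext_Some by blast
        have vpc: "is_valuation_map pc" using ipc unfolding is_Pi_ext_def by simp
        have vsc: "is_valuation_map sc" using isc unfolding is_Sig_ext_def by simp
        have s1: "sd0 \<subseteq>\<^sub>m pc" by (rule Pi_ext_sub[OF ipc])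
        have s2: "pd0 \<subseteq>\<^sub>m sc" by (rule Sig_ext_sub[OF isc])
        consider (dz) "is_zero_wo r d" | (ds) e where "is_succ_of_wo r e d"
          | (dl) "\<not> is_zero_wo r d" "\<not> (\<exists>e. is_succ_of_wo r e d)" by blast
        then have AB: "pd0 \<subseteq>\<^sub>m pc \<and> sd0 \<subseteq>\<^sub>m sc"
        proof cases
          case dz
          have "pd0 = m" "sd0 = m" using hier_zero[OF H dF dz] pd0 sd0 by simp_all
          then show ?thesis using s1 s2 by simp
        next
          case ds
          have le: "lt_wo r e d" using ds unfolding is_succ_of_wo_def by simp
          have lec: "lt_wo r e c" using wo_lt_trans[OF W le ld] .
          obtain pe0 se0 where pe0: "P e = Some pe0" and se0: "S e = Some se0"
            using good_ex[OF gd le] by blast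
          have sub: "pe0 \<subseteq>\<^sub>m pd0" "pe0 \<subseteq>\<^sub>m sd0" "se0 \<subseteq>\<^sub>m pd0" "se0 \<subseteq>\<^sub>m sd0"
            using good_below[OF gd pd0 sd0 le pe0 se0] by simp_all
          have ge: "good m r P S e" using IH[OF lec] pe0 se0 by simp
          note ges = good_self[OF ge pe0 se0]
          obtain p where p: "Pi_ext se0 = Some p" "p \<subseteq>\<^sub>m pc"
            using Pi_mono[OF sd rc ges(2) sub(4) pe] by blast
          obtain q where q: "Sig_ext pe0 = Some q" "q \<subseteq>\<^sub>m sc"
            using Sig_mono[OF sd rc ges(1) sub(1) se] by blast
          have "P d = Option.bind (S e) Pi_ext" "S d = Option.bind (P e) Sig_ext"
            using hier_succ[OF H ds] by simp_all
          then have "pd0 = p" "sd0 = q" using pd0 sd0 pe0 se0 p(1) q(1) by simp_all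
          then show ?thesis using p(2) q(2) by simp
        next
          case dl
          note hl = hier_lim[OF H dF dl(1) dl(2)]
          have allP: "\<forall>e. lt_wo r e d \<longrightarrow> P e \<noteq> None"
          proof (rule ccontr)
            assume "\<not> (\<forall>e. lt_wo r e d \<longrightarrow> P e \<noteq> None)"
            then have "P d = None" using hl by simp
            then show False using pd0 by simp
          qed
          have allS: "\<forall>e. lt_wo r e d \<longrightarrow> S e \<noteq> None"
          proof (rule ccontr)
            assume "\<not> (\<forall>e. lt_wo r e d \<longrightarrow> S e \<noteq> None)"
            then have "S d = None" using hl by simp
            then show False using sd0 by simp
          qed
          have pdeq: "pd0 = common_ext {the (P e) | e. lt_wo r e d}" using hl allP pd0 by simp
          have sdeq: "sd0 = common_ext {the (S e) | e. lt_wo r e d}" using hl allS sd0 by simp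
          have "\<forall>q\<in>{the (P e) | e. lt_wo r e d}. q \<subseteq>\<^sub>m pc"
          proof
            fix q assume "q \<in> {the (P e) | e. lt_wo r e d}"
            then obtain e where e: "lt_wo r e d" "q = the (P e)" by blast
            obtain pe0 se0 where pe0: "P e = Some pe0" and se0: "S e = Some se0"
              using good_ex[OF gd e(1)] by blast
            have "pe0 \<subseteq>\<^sub>m sd0" using good_below[OF gd pd0 sd0 e(1) pe0 se0] by simp
            then show "q \<subseteq>\<^sub>m pc" using e(2) pe0 s1 map_le_trans by fastforce
          qed
          then have A: "pd0 \<subseteq>\<^sub>m pc" unfolding pdeq by (rule ce_le)
          have "\<forall>q\<in>{the (S e) | e. lt_wo r e d}. q \<subseteq>\<^sub>m sc"
          proof
            fix q assume "q \<in> {the (S e) | e. lt_wo r e d}"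
            then obtain e where e: "lt_wo r e d" "q = the (S e)" by blast
            obtain pe0 se0 where pe0: "P e = Some pe0" and se0: "S e = Some se0"
              using good_ex[OF gd e(1)] by blast
            have "se0 \<subseteq>\<^sub>m pd0" using good_below[OF gd pd0 sd0 e(1) pe0 se0] by simp
            then show "q \<subseteq>\<^sub>m sc" using e(2) se0 s2 map_le_trans by fastforce
          qed
          then have B: "sd0 \<subseteq>\<^sub>m sc" unfolding sdeq by (rule ce_le)
          show ?thesis using A B by simp
        qed
        have below: "\<exists>pb sb. P b = Some pb \<and> S b = Some sb \<and>
             pb \<subseteq>\<^sub>m pc \<and> pb \<subseteq>\<^sub>m sc \<and> sb \<subseteq>\<^sub>m pc \<and> sb \<subseteq>\<^sub>m sc" if lb: "lt_wo r b c" for b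
        proof -
          have "b = d \<or> lt_wo r b d" using wo_succ_lt[OF W s lb] .
          then show ?thesis
          proof
            assume "b = d"
            then show ?thesis using pd0 sd0 AB s1 s2 by simp
          next
            assume bd: "lt_wo r b d"
            obtain pb sb where pb: "P b = Some pb" and sb: "S b = Some sb" using good_ex[OF gd bd] by blast
            note bs = good_below[OF gd pd0 sd0 bd pb sb]
            have "pb \<subseteq>\<^sub>m pc" using bs(1) AB map_le_trans by blast
            moreover have "pb \<subseteq>\<^sub>m sc" using bs(1) s2 map_le_trans by blast
            moreover have "sb \<subseteq>\<^sub>m pc" using bs(4) s1 map_le_trans by blast
            moreover have "sb \<subseteq>\<^sub>m sc" using bs(4) AB map_le_trans by blast
            ultimately show ?thesis using pb sb by blast
          qed
        qed
        have "m \<subseteq>\<^sub>m pc" using gds(4) s1 map_le_trans by blast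
        moreover have "m \<subseteq>\<^sub>m sc" using gds(3) s2 map_le_trans by blast
        ultimately show ?thesis unfolding good_def using pc sc vpc vsc below by blast
      next
        case l
        note hl = hier_lim[OF H c(1) l(1) l(2)]
        have allP: "\<forall>e. lt_wo r e c \<longrightarrow> P e \<noteq> None"
        proof (rule ccontr)
          assume "\<not> (\<forall>e. lt_wo r e c \<longrightarrow> P e \<noteq> None)"
          then have "P c = None" using hl by simp
          then show False using pc by simp
        qed
        have allS: "\<forall>e. lt_wo r e c \<longrightarrow> S e \<noteq> None"
        proof (rule ccontr)
          assume "\<not> (\<forall>e. lt_wo r e c \<longrightarrow> S e \<noteq> None)"
          then have "S c = None" using hl by simp
          then show False using sc by simp
        qed
        have defd: "\<exists>p s. P e = Some p \<and> S e = Some s" if "lt_wo r e c" for e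
          using allP allS that by auto
        define MP where "MP = {the (P e) | e. lt_wo r e c}"
        define MS where "MS = {the (S e) | e. lt_wo r e c}"
        have pceq: "pc = common_ext MP" using hl allP pc unfolding MP_def by simp
        have sceq: "sc = common_ext MS" using hl allS sc unfolding MS_def by simp
        have gb: "good m r P S b" if "lt_wo r b c" for b using IH[OF that] allP allS that by simp
        have chP: "chain_m MP" unfolding chain_m_def
        proof (intro ballI)
          fix q1 q2 assume "q1 \<in> MP" "q2 \<in> MP"
          then obtain b1 b2 where b: "lt_wo r b1 c" "q1 = the (P b1)" "lt_wo r b2 c" "q2 = the (P b2)"
            unfolding MP_def by blast
          have "b1 = b2 \<or> lt_wo r b1 b2 \<or> lt_wo r b2 b1"
            using wo_lt_total[OF W] wo_lt_field[OF b(1)] wo_lt_field[OF b(3)] by blast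
          then show "q1 \<subseteq>\<^sub>m q2 \<or> q2 \<subseteq>\<^sub>m q1"
          proof (elim disjE)
            assume "b1 = b2" then show ?thesis using b by simp
          next
            assume l12: "lt_wo r b1 b2"
            obtain p2 s2 where "P b2 = Some p2" "S b2 = Some s2" using defd[OF b(3)] by blast
            moreover obtain p1 s1 where "P b1 = Some p1" "S b1 = Some s1" using defd[OF b(1)] by blast
            ultimately show ?thesis using good_below[OF gb[OF b(3)] _ _ l12] b by simp
          next
            assume l21: "lt_wo r b2 b1"
            obtain p2 s2 where "P b2 = Some p2" "S b2 = Some s2" using defd[OF b(3)] by blast
            moreover obtain p1 s1 where "P b1 = Some p1" "S b1 = Some s1" using defd[OF b(1)] by blast
            ultimately show ?thesis using good_below[OF gb[OF b(1)] _ _ l21] b by simp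
          qed
        qed
        have chS: "chain_m MS" unfolding chain_m_def
        proof (intro ballI)
          fix q1 q2 assume "q1 \<in> MS" "q2 \<in> MS"
          then obtain b1 b2 where b: "lt_wo r b1 c" "q1 = the (S b1)" "lt_wo r b2 c" "q2 = the (S b2)"
            unfolding MS_def by blast
          have "b1 = b2 \<or> lt_wo r b1 b2 \<or> lt_wo r b2 b1"
            using wo_lt_total[OF W] wo_lt_field[OF b(1)] wo_lt_field[OF b(3)] by blast
          then show "q1 \<subseteq>\<^sub>m q2 \<or> q2 \<subseteq>\<^sub>m q1"
          proof (elim disjE)
            assume "b1 = b2" then show ?thesis using b by simp
          next
            assume l12: "lt_wo r b1 b2"
            obtain p2 s2 where "P b2 = Some p2" "S b2 = Some s2" using defd[OF b(3)] by blast
            moreover obtain p1 s1 where "P b1 = Some p1" "S b1 = Some s1" using defd[OF b(1)] by blast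
            ultimately show ?thesis using good_below[OF gb[OF b(3)] _ _ l12] b by simp
          next
            assume l21: "lt_wo r b2 b1"
            obtain p2 s2 where "P b2 = Some p2" "S b2 = Some s2" using defd[OF b(3)] by blast
            moreover obtain p1 s1 where "P b1 = Some p1" "S b1 = Some s1" using defd[OF b(1)] by blast
            ultimately show ?thesis using good_below[OF gb[OF b(1)] _ _ l21] b by simp
          qed
        qed
        have vP: "\<forall>q\<in>MP. is_valuation_map q"
        proof
          fix q assume "q \<in> MP"
          then obtain b where b: "lt_wo r b c" "q = the (P b)" unfolding MP_def by blast
          obtain p1 s1 where "P b = Some p1" "S b = Some s1" using defd[OF b(1)] by blast
          then show "is_valuation_map q" using good_self[OF gb[OF b(1)]] b(2) by simp
        qed
        have vS: "\<forall>q\<in>MS. is_valuation_map q"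
        proof
          fix q assume "q \<in> MS"
          then obtain b where b: "lt_wo r b c" "q = the (S b)" unfolding MS_def by blast
          obtain p1 s1 where "P b = Some p1" "S b = Some s1" using defd[OF b(1)] by blast
          then show "is_valuation_map q" using good_self[OF gb[OF b(1)]] b(2) by simp
        qed
        have vpc: "is_valuation_map pc" using ce_val[OF chP vP] pceq by simp
        have vsc: "is_valuation_map sc" using ce_val[OF chS vS] sceq by simp
        have geP: "the (P b) \<subseteq>\<^sub>m pc" if "lt_wo r b c" for b
          using ce_ge[OF _ chP, of "the (P b)"] that pceq unfolding MP_def by blast
        have geS: "the (S b) \<subseteq>\<^sub>m sc" if "lt_wo r b c" for b
          using ce_ge[OF _ chS, of "the (S b)"] that pceq sceq unfolding MS_def by blast
        have below: "\<exists>pb sb. P b = Some pb \<and> S b = Some sb \<and>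
             pb \<subseteq>\<^sub>m pc \<and> pb \<subseteq>\<^sub>m sc \<and> sb \<subseteq>\<^sub>m pc \<and> sb \<subseteq>\<^sub>m sc" if lb: "lt_wo r b c" for b
        proof -
          obtain b' where b': "lt_wo r b b'" "lt_wo r b' c"
            using l(2) lb unfolding is_succ_of_wo_def by blast
          obtain pb sb where pb: "P b = Some pb" and sb: "S b = Some sb" using defd[OF lb] by blast
          obtain pb' sb' where pb': "P b' = Some pb'" and sb': "S b' = Some sb'" using defd[OF b'(2)] by blast
          note bs = good_below[OF gb[OF b'(2)] pb' sb' b'(1) pb sb]
          have "pb \<subseteq>\<^sub>m pc" using geP[OF lb] pb by simp
          moreover have "sb \<subseteq>\<^sub>m sc" using geS[OF lb] sb by simp
          moreover have "pb \<subseteq>\<^sub>m sc" using bs(2) geS[OF b'(2)] sb' map_le_trans by fastforce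
          moreover have "sb \<subseteq>\<^sub>m pc" using bs(3) geP[OF b'(2)] pb' map_le_trans by fastforce
          ultimately show ?thesis using pb sb by blast
        qed
        obtain b0 where b0: "lt_wo r b0 c" using wo_exists_lt[OF W c(1) l(1)] by blast
        obtain pb sb where pb: "P b0 = Some pb" and sb: "S b0 = Some sb" using defd[OF b0] by blast
        note g0 = good_self[OF gb[OF b0] pb sb]
        have "m \<subseteq>\<^sub>m pc" using g0(3) geP[OF b0] pb map_le_trans by fastforce
        moreover have "m \<subseteq>\<^sub>m sc" using g0(4) geS[OF b0] sb map_le_trans by fastforce
        ultimately show ?thesis unfolding good_def using pc sc vpc vsc below by blast
      qed
    qed
  qed
qed



lemma hier_below_closed:
  fixes m :: "'v::lattice \<rightharpoonup> 'e::ordered_ab_group_add" and r :: "'o rel"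
  assumes sd: "sigma_distributive TYPE('v)" and rc: "R_complete TYPE('e)"
    and vm: "is_valuation_map m" and W: "Well_order r" and H: "is_hierarchy m r P S"
    and PF: "Pi_ext F = Some F" and SF: "Sig_ext F = Some F" and mF: "m \<subseteq>\<^sub>m F"
  shows "\<forall>c. c \<in> Field r \<longrightarrow> P c \<noteq> None \<longrightarrow> S c \<noteq> None \<longrightarrow> the (P c) \<subseteq>\<^sub>m F \<and> the (S c) \<subseteq>\<^sub>m F"
proof
  note HI = hier_inv[OF sd rc vm W H]
  fix c0
  show "c0 \<in> Field r \<longrightarrow> P c0 \<noteq> None \<longrightarrow> S c0 \<noteq> None \<longrightarrow> the (P c0) \<subseteq>\<^sub>m F \<and> the (S c0) \<subseteq>\<^sub>m F"
  proof (induct c0 rule: wf_induct[OF wo_wf[OF W]])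
    fix c
    assume IH0: "\<forall>y. (y, c) \<in> {(b,a). lt_wo r b a} \<longrightarrow>
       (y \<in> Field r \<longrightarrow> P y \<noteq> None \<longrightarrow> S y \<noteq> None \<longrightarrow> the (P y) \<subseteq>\<^sub>m F \<and> the (S y) \<subseteq>\<^sub>m F)"
    have IH: "the (P b) \<subseteq>\<^sub>m F \<and> the (S b) \<subseteq>\<^sub>m F" if "lt_wo r b c" "P b \<noteq> None" "S b \<noteq> None" for b
    proof -
      have "b \<in> Field r" using wo_lt_field[OF that(1)] by simp
      then show ?thesis using IH0 that by simp
    qed
    show "c \<in> Field r \<longrightarrow> P c \<noteq> None \<longrightarrow> S c \<noteq> None \<longrightarrow> the (P c) \<subseteq>\<^sub>m F \<and> the (S c) \<subseteq>\<^sub>m F"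
    proof (intro impI)
      assume c: "c \<in> Field r" "P c \<noteq> None" "S c \<noteq> None"
      obtain pc where pc: "P c = Some pc" using c(2) by auto
      obtain sc where sc: "S c = Some sc" using c(3) by auto
      consider (z) "is_zero_wo r c" | (s) d where "is_succ_of_wo r d c"
        | (l) "\<not> is_zero_wo r c" "\<not> (\<exists>d. is_succ_of_wo r d c)" by blast
      then show "the (P c) \<subseteq>\<^sub>m F \<and> the (S c) \<subseteq>\<^sub>m F"
      proof cases
        case z
        have "P c = Some m" "S c = Some m" using hier_zero[OF H c(1) z] by simp_all
        then show ?thesis using mF by simp
      next
        case s
        have ld: "lt_wo r d c" using s unfolding is_succ_of_wo_def by simp
        have dF: "d \<in> Field r" using wo_lt_field[OF ld] by simp
        have hs: "P c = Option.bind (S d) Pi_ext" "S c = Option.bind (P d) Sig_ext"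
          using hier_succ[OF H s] by simp_all
        obtain sd0 where sd0: "S d = Some sd0" and pe: "Pi_ext sd0 = Some pc"
          using hs(1) pc by (cases "S d") auto
        obtain pd0 where pd0: "P d = Some pd0" and se: "Sig_ext pd0 = Some sc"
          using hs(2) sc by (cases "P d") auto
        have gd: "good m r P S d" using HI dF pd0 sd0 by simp
        note gds = good_self[OF gd pd0 sd0]
        have sub: "pd0 \<subseteq>\<^sub>m F" "sd0 \<subseteq>\<^sub>m F" using IH[OF ld] pd0 sd0 by simp_all
        obtain p where p: "Pi_ext sd0 = Some p" "p \<subseteq>\<^sub>m F" using Pi_mono[OF sd rc gds(2) sub(2) PF] by blast
        obtain q where q: "Sig_ext pd0 = Some q" "q \<subseteq>\<^sub>m F" using Sig_mono[OF sd rc gds(1) sub(1) SF] by blast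
        show ?thesis using p q pe se pc sc by simp
      next
        case l
        note hl = hier_lim[OF H c(1) l(1) l(2)]
        have allP: "\<forall>e. lt_wo r e c \<longrightarrow> P e \<noteq> None"
        proof (rule ccontr)
          assume "\<not> (\<forall>e. lt_wo r e c \<longrightarrow> P e \<noteq> None)"
          then have "P c = None" using hl by simp
          then show False using pc by simp
        qed
        have allS: "\<forall>e. lt_wo r e c \<longrightarrow> S e \<noteq> None"
        proof (rule ccontr)
          assume "\<not> (\<forall>e. lt_wo r e c \<longrightarrow> S e \<noteq> None)"
          then have "S c = None" using hl by simp
          then show False using sc by simp
        qed
        have pceq: "pc = common_ext {the (P e) | e. lt_wo r e c}" using hl allP pc by simp
        have sceq: "sc = common_ext {the (S e) | e. lt_wo r e c}" using hl allS sc by simp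
        have "\<forall>q\<in>{the (P e) | e. lt_wo r e c}. q \<subseteq>\<^sub>m F"
        proof
          fix q assume "q \<in> {the (P e) | e. lt_wo r e c}"
          then obtain e where e: "lt_wo r e c" "q = the (P e)" by blast
          then show "q \<subseteq>\<^sub>m F" using IH[OF e(1)] allP allS by simp
        qed
        then have A: "pc \<subseteq>\<^sub>m F" unfolding pceq by (rule ce_le)
        have "\<forall>q\<in>{the (S e) | e. lt_wo r e c}. q \<subseteq>\<^sub>m F"
        proof
          fix q assume "q \<in> {the (S e) | e. lt_wo r e c}"
          then obtain e where e: "lt_wo r e c" "q = the (S e)" by blast
          then show "q \<subseteq>\<^sub>m F" using IH[OF e(1)] allP allS by simp
        qed
        then have B: "sc \<subseteq>\<^sub>m F" unfolding sceq by (rule ce_le)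
        show ?thesis using A B pc sc by simp
      qed
    qed
  qed
qed

lemma hier_defined:
  fixes m :: "'v::lattice \<rightharpoonup> 'e::ordered_ab_group_add" and r :: "'o rel"
  assumes sd: "sigma_distributive TYPE('v)" and rc: "R_complete TYPE('e)"
    and vm: "is_valuation_map m" and W: "Well_order r" and H: "is_hierarchy m r P S"
    and PF: "Pi_ext F = Some F" and SF: "Sig_ext F = Some F" and mF: "m \<subseteq>\<^sub>m F"
  shows "\<forall>c. c \<in> Field r \<longrightarrow> P c \<noteq> None \<and> S c \<noteq> None"
proof
  note HI = hier_inv[OF sd rc vm W H]
  note HB = hier_below_closed[OF sd rc vm W H PF SF mF]
  fix c0
  show "c0 \<in> Field r \<longrightarrow> P c0 \<noteq> None \<and> S c0 \<noteq> None"
  proof (induct c0 rule: wf_induct[OF wo_wf[OF W]])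
    fix c
    assume IH0: "\<forall>y. (y, c) \<in> {(b,a). lt_wo r b a} \<longrightarrow> (y \<in> Field r \<longrightarrow> P y \<noteq> None \<and> S y \<noteq> None)"
    have IH: "P b \<noteq> None \<and> S b \<noteq> None" if "lt_wo r b c" for b
    proof -
      have "b \<in> Field r" using wo_lt_field[OF that(1)] by simp
      then show ?thesis using IH0 that by simp
    qed
    show "c \<in> Field r \<longrightarrow> P c \<noteq> None \<and> S c \<noteq> None"
    proof (intro impI)
      assume c: "c \<in> Field r"
      consider (z) "is_zero_wo r c" | (s) d where "is_succ_of_wo r d c"
        | (l) "\<not> is_zero_wo r c" "\<not> (\<exists>d. is_succ_of_wo r d c)" by blast
      then show "P c \<noteq> None \<and> S c \<noteq> None"
      proof cases
        case z
        then show ?thesis using hier_zero[OF H c z] by simp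
      next
        case s
        have ld: "lt_wo r d c" using s unfolding is_succ_of_wo_def by simp
        have dF: "d \<in> Field r" using wo_lt_field[OF ld] by simp
        have hs: "P c = Option.bind (S d) Pi_ext" "S c = Option.bind (P d) Sig_ext"
          using hier_succ[OF H s] by simp_all
        obtain sd0 where sd0: "S d = Some sd0" using IH[OF ld] by auto
        obtain pd0 where pd0: "P d = Some pd0" using IH[OF ld] by auto
        have gd: "good m r P S d" using HI dF pd0 sd0 by simp
        note gds = good_self[OF gd pd0 sd0]
        have sub: "pd0 \<subseteq>\<^sub>m F" "sd0 \<subseteq>\<^sub>m F" using HB[rule_format, OF dF] pd0 sd0 by simp_all
        obtain p where p: "Pi_ext sd0 = Some p" using Pi_mono[OF sd rc gds(2) sub(2) PF] by blast
        obtain q where q: "Sig_ext pd0 = Some q" using Sig_mono[OF sd rc gds(1) sub(1) SF] by blast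
        show ?thesis using p q hs sd0 pd0 by simp
      next
        case l
        note hl = hier_lim[OF H c l(1) l(2)]
        then show ?thesis using IH by simp
      qed
    qed
  qed
qed

lemma collapse_unfold:
  fixes m :: "'v::lattice \<rightharpoonup> 'e::ordered_ab_group_add"
  assumes "collapses_at m Q"
  obtains r :: "'v set rel" and P S a where "Well_order r" "is_hierarchy m r P S" "a \<in> Field r"
    "P a \<noteq> None" "S a \<noteq> None" "Pi_ext (the (S a)) \<noteq> None" "Sig_ext (the (P a)) \<noteq> None"
    "Q = the (P a) \<or> Q = the (S a)" "Pi_ext Q = Some Q" "Sig_ext Q = Some Q"
  using assms unfolding collapses_at_def by blast

lemma collapse_props:
  fixes m :: "'v::lattice \<rightharpoonup> 'e::ordered_ab_group_add"
  assumes sd: "sigma_distributive TYPE('v)" and rc: "R_complete TYPE('e)"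
    and vm: "is_valuation_map m" and C: "collapses_at m Q"
  shows "m \<subseteq>\<^sub>m Q" "Pi_ext Q = Some Q" "Sig_ext Q = Some Q"
    "\<And>F. Pi_ext F = Some F \<Longrightarrow> Sig_ext F = Some F \<Longrightarrow> m \<subseteq>\<^sub>m F \<Longrightarrow> Q \<subseteq>\<^sub>m F"
proof -
  obtain r :: "'v set rel" and P S a where c: "Well_order r" "is_hierarchy m r P S" "a \<in> Field r"
    "P a \<noteq> None" "S a \<noteq> None" "Q = the (P a) \<or> Q = the (S a)" "Pi_ext Q = Some Q" "Sig_ext Q = Some Q"
    by (rule collapse_unfold[OF C])
  show "Pi_ext Q = Some Q" "Sig_ext Q = Some Q" using c by simp_all
  obtain pa sa where pa: "P a = Some pa" and sa: "S a = Some sa" using c(4,5) by auto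
  have "good m r P S a" using hier_inv[OF sd rc vm c(1,2)] c(3) pa sa by simp
  note g = good_self[OF this pa sa]
  show "m \<subseteq>\<^sub>m Q" using c(6) g pa sa by auto
  fix F assume F: "Pi_ext F = Some F" "Sig_ext F = Some F" "m \<subseteq>\<^sub>m F"
  have "the (P a) \<subseteq>\<^sub>m F \<and> the (S a) \<subseteq>\<^sub>m F"
    using hier_below_closed[OF sd rc vm c(1,2) F] c(3-5) by simp
  then show "Q \<subseteq>\<^sub>m F" using c(6) by auto
qed

lemma collapse_uniq:
  fixes m :: "'v::lattice \<rightharpoonup> 'e::ordered_ab_group_add"
  assumes sd: "sigma_distributive TYPE('v)" and rc: "R_complete TYPE('e)"
    and vm: "is_valuation_map m" and C1: "collapses_at m Q1" and C2: "collapses_at m Q2"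
  shows "Q1 = Q2"
proof -
  note p1 = collapse_props[OF sd rc vm C1]
  note p2 = collapse_props[OF sd rc vm C2]
  have "Q1 \<subseteq>\<^sub>m Q2" using p1(4)[OF p2(2,3,1)] .
  moreover have "Q2 \<subseteq>\<^sub>m Q1" using p2(4)[OF p1(2,3,1)] .
  ultimately show ?thesis by (rule map_le_antisym)
qed



definition hstep :: "('v::lattice \<rightharpoonup> 'e::ordered_ab_group_add) \<Rightarrow> 'o rel \<Rightarrow>
    ('o \<Rightarrow> ('v \<rightharpoonup> 'e) option \<times> ('v \<rightharpoonup> 'e) option) \<Rightarrow> 'o \<Rightarrow> ('v \<rightharpoonup> 'e) option \<times> ('v \<rightharpoonup> 'e) option" where
  "hstep m r g a = (if is_zero_wo r a then (Some m, Some m)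
     else if \<exists>b. is_succ_of_wo r b a then
       (Option.bind (snd (g (SOME b. is_succ_of_wo r b a))) Pi_ext,
        Option.bind (fst (g (SOME b. is_succ_of_wo r b a))) Sig_ext)
     else ((if \<forall>b. lt_wo r b a \<longrightarrow> fst (g b) \<noteq> None
            then Some (common_ext {the (fst (g b)) | b. lt_wo r b a}) else None),
           (if \<forall>b. lt_wo r b a \<longrightarrow> snd (g b) \<noteq> None
            then Some (common_ext {the (snd (g b)) | b. lt_wo r b a}) else None)))"

definition hrec :: "('v::lattice \<rightharpoonup> 'e::ordered_ab_group_add) \<Rightarrow> 'o rel \<Rightarrow> 'o \<Rightarrow> ('v \<rightharpoonup> 'e) option \<times> ('v \<rightharpoonup> 'e) option" where
  "hrec m r = wfrec {(b,a). lt_wo r b a} (hstep m r)"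

lemma succ_lt: "is_succ_of_wo r b a \<Longrightarrow> lt_wo r b a"
  unfolding is_succ_of_wo_def by simp

lemma hstep_cong:
  assumes "\<And>b. lt_wo r b a \<Longrightarrow> g b = g' b"
  shows "hstep m r g a = hstep m r g' a"
proof -
  have e1: "(\<forall>b. lt_wo r b a \<longrightarrow> fst (g b) \<noteq> None) = (\<forall>b. lt_wo r b a \<longrightarrow> fst (g' b) \<noteq> None)"
    using assms by (simp cong: imp_cong)
  have e2: "(\<forall>b. lt_wo r b a \<longrightarrow> snd (g b) \<noteq> None) = (\<forall>b. lt_wo r b a \<longrightarrow> snd (g' b) \<noteq> None)"
    using assms by (simp cong: imp_cong)
  have e3: "{the (fst (g b)) | b. lt_wo r b a} = {the (fst (g' b)) | b. lt_wo r b a}"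
    unfolding setcompr_eq_image by (rule image_cong) (simp_all add: assms)
  have e4: "{the (snd (g b)) | b. lt_wo r b a} = {the (snd (g' b)) | b. lt_wo r b a}"
    unfolding setcompr_eq_image by (rule image_cong) (simp_all add: assms)
  have e5: "g (SOME b. is_succ_of_wo r b a) = g' (SOME b. is_succ_of_wo r b a)" if "\<exists>b. is_succ_of_wo r b a"
  proof -
    have "is_succ_of_wo r (SOME b. is_succ_of_wo r b a) a" using someI_ex[OF that] .
    then have "lt_wo r (SOME b. is_succ_of_wo r b a) a" by (rule succ_lt)
    then show ?thesis by (rule assms)
  qed
  show ?thesis
  proof (cases "is_zero_wo r a")
    case True then show ?thesis unfolding hstep_def by simp
  next
    case nz: False
    show ?thesis
    proof (cases "\<exists>b. is_succ_of_wo r b a")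
      case True
      then show ?thesis using nz e5[OF True] unfolding hstep_def by (simp only: if_False if_True)
    next
      case False
      then show ?thesis using nz unfolding hstep_def e1 e2 e3 e4 by (simp only: if_False)
    qed
  qed
qed

lemma hrec_eq:
  assumes W: "Well_order r"
  shows "hrec m r a = hstep m r (hrec m r) a"
proof -
  have "hrec m r a = hstep m r (cut (hrec m r) {(b,a). lt_wo r b a} a) a"
    unfolding hrec_def by (rule wfrec[OF wo_wf[OF W]])
  also have "\<dots> = hstep m r (hrec m r) a"
    by (rule hstep_cong) (simp add: cut_apply)
  finally show ?thesis .
qed

lemma hrec_hier:
  assumes W: "Well_order r"
  shows "is_hierarchy m r (\<lambda>a. fst (hrec m r a)) (\<lambda>a. snd (hrec m r a))"
  unfolding is_hierarchy_def
proof (intro ballI conjI impI allI)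
  fix a assume a: "a \<in> Field r"
  {
    assume z: "is_zero_wo r a"
    then show "fst (hrec m r a) = Some m" "snd (hrec m r a) = Some m"
      using hrec_eq[OF W, of m a] unfolding hstep_def by simp_all
  }
  {
    fix b assume s: "is_succ_of_wo r b a"
    have nz: "\<not> is_zero_wo r a" using wo_zero_nolt[OF W] s unfolding is_succ_of_wo_def by blast
    have ex: "\<exists>b. is_succ_of_wo r b a" using s by blast
    have sb: "(SOME b. is_succ_of_wo r b a) = b" using wo_succ_uniq[OF W someI_ex[OF ex] s] .
    show "fst (hrec m r a) = Option.bind (snd (hrec m r b)) Pi_ext"
      "snd (hrec m r a) = Option.bind (fst (hrec m r b)) Sig_ext"
      using hrec_eq[OF W, of m a] nz ex sb unfolding hstep_def by simp_all
  }
  {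
    assume l: "\<not> is_zero_wo r a \<and> \<not> (\<exists>b. is_succ_of_wo r b a)"
    show "fst (hrec m r a) = (if \<forall>b. lt_wo r b a \<longrightarrow> fst (hrec m r b) \<noteq> None
                   then Some (common_ext {the (fst (hrec m r b)) | b. lt_wo r b a}) else None)"
      "snd (hrec m r a) = (if \<forall>b. lt_wo r b a \<longrightarrow> snd (hrec m r b) \<noteq> None
                   then Some (common_ext {the (snd (hrec m r b)) | b. lt_wo r b a}) else None)"
      using hrec_eq[OF W, of m a] l unfolding hstep_def by simp_all
  }
qed



lemma fin_dec:
  fixes a :: "nat \<Rightarrow> 'v::lattice"
  assumes fin: "finite (UNIV :: 'v set)" and am: "antimono a"
  shows "\<exists>N. \<forall>n. a N \<le> a n"
proof -
  have "finite (range a)" using fin by (rule finite_subset[rotated]) simp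
  then obtain mn where mn: "mn \<in> range a" "\<forall>b\<in>range a. b \<le> mn \<longrightarrow> mn = b"
    using finite_has_minimal[of "range a"] by blast
  then obtain N where N: "mn = a N" by blast
  have "a N \<le> a n" for n
  proof -
    have "a (max N n) \<le> a N" "a (max N n) \<le> a n" using am unfolding antimono_def by simp_all
    then have "a (max N n) = a N" using mn(2) N by auto
    then show ?thesis using \<open>a (max N n) \<le> a n\<close> by simp
  qed
  then show ?thesis by blast
qed

lemma fin_inc:
  fixes a :: "nat \<Rightarrow> 'v::lattice"
  assumes fin: "finite (UNIV :: 'v set)" and am: "mono a"
  shows "\<exists>N. \<forall>n. a n \<le> a N"
proof -
  have "finite (range a)" using fin by (rule finite_subset[rotated]) simp
  then obtain mn where mn: "mn \<in> range a" "\<forall>b\<in>range a. mn \<le> b \<longrightarrow> mn = b"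
    using finite_has_maximal[of "range a"] by blast
  then obtain N where N: "mn = a N" by blast
  have "a n \<le> a N" for n
  proof -
    have "a N \<le> a (max N n)" "a n \<le> a (max N n)" using am unfolding mono_def by simp_all
    then have "a (max N n) = a N" using mn(2) N by auto
    then show ?thesis using \<open>a n \<le> a (max N n)\<close> by simp
  qed
  then show ?thesis by blast
qed

lemma fin_Pi:
  fixes m :: "'v::lattice \<rightharpoonup> 'e::ordered_ab_group_add"
  assumes fin: "finite (UNIV :: 'v set)" and vm: "is_valuation_map m"
  shows "Pi_ext m = Some m"
proof -
  have mo: "\<And>u v. u \<in> dom m \<Longrightarrow> v \<in> dom m \<Longrightarrow> u \<le> v \<Longrightarrow> mval m u \<le> mval m v"
    using vm unfolding is_valuation_map_def valuation_def by auto
  have key: "x \<in> dom m \<and> m x = Some e" if a: "conv_dec m a" "is_inf_of (range a) x"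
      "is_inf_of (range (\<lambda>n. mval m (a n))) e" for a x e
  proof -
    have ad: "\<And>n. a n \<in> dom m" and am: "antimono a" using a(1) unfolding conv_dec_def by auto
    obtain N where N: "\<forall>n. a N \<le> a n" using fin_dec[OF fin am] by blast
    have "a N \<le> x" using a(2) N unfolding is_inf_of_def by auto
    moreover have "x \<le> a N" using a(2) unfolding is_inf_of_def by auto
    ultimately have xN: "x = a N" by simp
    have "mval m (a N) \<le> e" using a(3) N mo ad unfolding is_inf_of_def by auto
    moreover have "e \<le> mval m (a N)" using a(3) unfolding is_inf_of_def by auto
    ultimately have "e = mval m (a N)" by simp
    then show ?thesis using xN ad[of N] unfolding mval_def by auto
  qed
  have "dom m = PiDom m"
  proof
    show "dom m \<subseteq> PiDom m"
    proof
      fix x assume x: "x \<in> dom m"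
      have "conv_dec m (\<lambda>n. x)" unfolding conv_dec_def using x inf_single[of x] inf_single[of "mval m x"]
        by (auto simp: antimono_def)
      then show "x \<in> PiDom m" unfolding PiDom_def using inf_single[of x] by auto
    qed
    show "PiDom m \<subseteq> dom m"
    proof
      fix x assume "x \<in> PiDom m"
      then obtain a where a: "conv_dec m a" "is_inf_of (range a) x" unfolding PiDom_def by auto
      then obtain e where "is_inf_of (range (\<lambda>n. mval m (a n))) e" unfolding conv_dec_def by auto
      then show "x \<in> dom m" using key a by blast
    qed
  qed
  then have "is_Pi_ext m m" unfolding is_Pi_ext_def using vm key by blast
  then show ?thesis using Pi_ext_Some by blast
qed

lemma fin_Sig:
  fixes m :: "'v::lattice \<rightharpoonup> 'e::ordered_ab_group_add"
  assumes fin: "finite (UNIV :: 'v set)" and vm: "is_valuation_map m"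
  shows "Sig_ext m = Some m"
proof -
  have mo: "\<And>u v. u \<in> dom m \<Longrightarrow> v \<in> dom m \<Longrightarrow> u \<le> v \<Longrightarrow> mval m u \<le> mval m v"
    using vm unfolding is_valuation_map_def valuation_def by auto
  have key: "x \<in> dom m \<and> m x = Some e" if a: "conv_inc m a" "is_sup_of (range a) x"
      "is_sup_of (range (\<lambda>n. mval m (a n))) e" for a x e
  proof -
    have ad: "\<And>n. a n \<in> dom m" and am: "mono a" using a(1) unfolding conv_inc_def by auto
    obtain N where N: "\<forall>n. a n \<le> a N" using fin_inc[OF fin am] by blast
    have "x \<le> a N" using a(2) N unfolding is_sup_of_def by auto
    moreover have "a N \<le> x" using a(2) unfolding is_sup_of_def by auto
    ultimately have xN: "x = a N" by simp
    have "e \<le> mval m (a N)" using a(3) N mo ad unfolding is_sup_of_def by auto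
    moreover have "mval m (a N) \<le> e" using a(3) unfolding is_sup_of_def by auto
    ultimately have "e = mval m (a N)" by simp
    then show ?thesis using xN ad[of N] unfolding mval_def by auto
  qed
  have "dom m = SigDom m"
  proof
    show "dom m \<subseteq> SigDom m"
    proof
      fix x assume x: "x \<in> dom m"
      have "conv_inc m (\<lambda>n. x)" unfolding conv_inc_def using x sup_single[of x] sup_single[of "mval m x"]
        by (auto simp: mono_def)
      then show "x \<in> SigDom m" unfolding SigDom_def using sup_single[of x] by auto
    qed
    show "SigDom m \<subseteq> dom m"
    proof
      fix x assume "x \<in> SigDom m"
      then obtain a where a: "conv_inc m a" "is_sup_of (range a) x" unfolding SigDom_def by auto
      then obtain e where "is_sup_of (range (\<lambda>n. mval m (a n))) e" unfolding conv_inc_def by auto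
      then show "x \<in> dom m" using key a by blast
    qed
  qed
  then have "is_Sig_ext m m" unfolding is_Sig_ext_def using vm key by blast
  then show ?thesis using Sig_ext_Some by blast
qed



lemma no_inj_pow:
  assumes inf: "infinite (UNIV :: 'v set)" and inj: "inj (f :: 'v set \<Rightarrow> 'v \<times> bool)"
  shows False
proof -
  have 1: "(card_of (UNIV :: 'v set set), card_of (UNIV :: ('v \<times> bool) set)) \<in> ordLeq"
    using inj card_of_ordLeq[of "UNIV :: 'v set set" "UNIV :: ('v \<times> bool) set"] by blast
  obtain x :: 'v where True by blast
  obtain y :: 'v where y: "y \<noteq> x"
  proof -
    have "UNIV - {x} \<noteq> {}" using inf by (metis finite.emptyI finite_insert insert_Diff_single insert_absorb2 Diff_empty)
    then show ?thesis using that by blast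
  qed
  have "inj (\<lambda>b::bool. if b then x else y)" unfolding inj_def using y by auto
  then have 2: "(card_of (UNIV :: bool set), card_of (UNIV :: 'v set)) \<in> ordLeq"
    using card_of_ordLeq[of "UNIV :: bool set" "UNIV :: 'v set"] by blast
  have "(card_of ((UNIV :: 'v set) \<times> (UNIV :: bool set)), card_of (UNIV :: 'v set)) \<in> ordIso"
    using card_of_Times_infinite[OF inf _ 2] by simp
  then have 3: "(card_of (UNIV :: ('v \<times> bool) set), card_of (UNIV :: 'v set)) \<in> ordIso" by simp
  have 4: "(card_of (UNIV :: 'v set set), card_of (UNIV :: 'v set)) \<in> ordLeq" using ordLeq_ordIso_trans[OF 1 3] .
  have 5: "(card_of (UNIV :: 'v set), card_of (Pow (UNIV :: 'v set))) \<in> ordLess" by (rule card_of_Pow)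
  then have "(card_of (UNIV :: 'v set), card_of (UNIV :: 'v set set)) \<in> ordLess" by simp
  then show False using 4 not_ordLess_ordLeq by blast
qed

lemma wo_succ_exists:
  assumes W: "Well_order r" and c: "lt_wo r c x"
  shows "\<exists>s. is_succ_of_wo r c s"
proof -
  have "x \<in> {x. lt_wo r c x}" using c by simp
  then obtain s where s: "s \<in> {x. lt_wo r c x}" and smin: "\<And>y. (y, s) \<in> r - Id \<Longrightarrow> y \<notin> {x. lt_wo r c x}"
    using wfE_min[OF wo_facts(4)[OF W]] by metis
  have "\<not> (\<exists>d. lt_wo r c d \<and> lt_wo r d s)"
  proof
    assume "\<exists>d. lt_wo r c d \<and> lt_wo r d s"
    then obtain d where d: "lt_wo r c d" "lt_wo r d s" by blast
    then have "(d, s) \<in> r - Id" unfolding lt_wo_def by simp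
    then show False using smin d(1) by blast
  qed
  then show ?thesis using s unfolding is_succ_of_wo_def by blast
qed

lemma card_no_max:
  assumes inf: "infinite (UNIV :: 'v set)"
  shows "\<exists>x. lt_wo (card_of (UNIV :: 'v set set)) c x"
proof -
  let ?r = "(card_of (UNIV :: 'v set set))"
  have W: "Well_order ?r" using card_of_well_order_on[of "UNIV :: 'v set set"] Field_card_of[of "UNIV :: 'v set set"] by simp
  have F: "Field ?r = UNIV" by (rule Field_card_of)
  have "infinite (UNIV :: 'v set set)" using inf by (metis Pow_UNIV finite_Pow_iff)
  then have "infinite (Field ?r)" using F by simp
  then have "\<not> (\<exists>a. Field ?r = under ?r a)" by (rule Card_order_infinite_not_under[OF card_of_Card_order])
  then have "Field ?r \<noteq> under ?r c" by blast
  then obtain x where x: "x \<notin> under ?r c" using F by blast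
  then have "(x, c) \<notin> ?r" unfolding under_def by simp
  moreover have "(c, x) \<in> ?r \<or> (x, c) \<in> ?r" using wo_facts(3)[OF W] F by simp
  moreover have "(c, c) \<in> ?r" using wo_facts(5)[OF W] F by simp
  ultimately have "lt_wo ?r c x" unfolding lt_wo_def by auto
  then show ?thesis by blast
qed

lemma map_eq_sub:
  assumes "f \<subseteq>\<^sub>m F" "g \<subseteq>\<^sub>m F" "dom f = dom g"
  shows "f = g"
proof
  fix x show "f x = g x"
  proof (cases "x \<in> dom f")
    case True
    then have "f x = F x" "g x = F x" using assms unfolding map_le_def by auto
    then show ?thesis by simp
  next
    case False
    then have "x \<notin> dom g" using assms(3) by simp
    then show ?thesis using False by (simp add: domIff)
  qed
qed



lemma wo_zero_exists:
  assumes W: "Well_order r" and a: "a \<in> Field r"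
  shows "\<exists>z. is_zero_wo r z"
proof -
  obtain z where z: "z \<in> Field r" and zmin: "\<And>y. (y, z) \<in> r - Id \<Longrightarrow> y \<notin> Field r"
    using wfE_min[OF wo_facts(4)[OF W] a] by metis
  have zb: "(z,b) \<in> r" if b: "b \<in> Field r" for b
  proof (cases "b = z")
    case True
    then show ?thesis using wo_facts(5)[OF W] z by simp
  next
    case False
    have "(z,b) \<in> r \<or> (b,z) \<in> r" using wo_facts(3)[OF W] z b by simp
    moreover have "(b,z) \<notin> r" using zmin[of b] False b by auto
    ultimately show ?thesis by simp
  qed
  then have "is_zero_wo r z" unfolding is_zero_wo_def using z by simp
  then show ?thesis by blast
qed

lemma exists_collapse:
  fixes m :: "'v::lattice \<rightharpoonup> 'e::ordered_ab_group_add"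
  assumes sd: "sigma_distributive TYPE('v)" and rc: "R_complete TYPE('e)"
    and vm: "is_valuation_map m"
    and PT: "Pi_ext T = Some T" and ST: "Sig_ext T = Some T" and mT: "m \<subseteq>\<^sub>m T"
  shows "\<exists>Q. collapses_at m Q"
proof -
  define r where "r = card_of (UNIV :: 'v set set)"
  have W: "Well_order r" unfolding r_def
    using card_of_well_order_on[of "UNIV :: 'v set set"] Field_card_of[of "UNIV :: 'v set set"] by simp
  have Fr: "Field r = UNIV" unfolding r_def by (rule Field_card_of)
  define P where "P = (\<lambda>a. fst (hrec m r a))"
  define S where "S = (\<lambda>a. snd (hrec m r a))"
  have H: "is_hierarchy m r P S" unfolding P_def S_def by (rule hrec_hier[OF W])
  have D: "P c \<noteq> None \<and> S c \<noteq> None" for c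
    using hier_defined[OF sd rc vm W H PT ST mT] Fr by simp
  define pp where "pp c = the (P c)" for c
  define ss where "ss c = the (S c)" for c
  have Pc: "P c = Some (pp c)" "S c = Some (ss c)" for c using D[of c] unfolding pp_def ss_def by auto
  have G: "good m r P S c" for c using hier_inv[OF sd rc vm W H] D Fr by simp
  have Bd: "pp c \<subseteq>\<^sub>m T \<and> ss c \<subseteq>\<^sub>m T" for c
    using hier_below_closed[OF sd rc vm W H PT ST mT] D Fr unfolding pp_def ss_def by simp
  have CI: "collapses_at m (pp c)" if "Pi_ext (ss c) \<noteq> None" "Sig_ext (pp c) \<noteq> None"
    "Pi_ext (pp c) = Some (pp c)" "Sig_ext (pp c) = Some (pp c)" for c
    unfolding collapses_at_def
    apply (rule exI[of _ r], rule exI[of _ P], rule exI[of _ S], rule exI[of _ c])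
    using W H Fr D that unfolding pp_def ss_def by simp
  show ?thesis
  proof (cases "finite (UNIV :: 'v set)")
    case True
    obtain z where z: "is_zero_wo r z" using wo_zero_exists[OF W, of "{}"] Fr by auto
    have "P z = Some m" "S z = Some m" using hier_zero[OF H _ z] Fr by simp_all
    then have "pp z = m" "ss z = m" using Pc[of z] by simp_all
    then show ?thesis using CI[of z] fin_Pi[OF True vm] fin_Sig[OF True vm] by auto
  next
    case False
    show ?thesis
    proof (rule ccontr)
      assume nc: "\<not> (\<exists>Q. collapses_at m Q)"
      have SX: "\<exists>s. is_succ_of_wo r c s" for c
      proof -
        obtain x where "lt_wo r c x" using card_no_max[OF False, of c] unfolding r_def by blast
        then show ?thesis using wo_succ_exists[OF W] by blast
      qed
      define sc where "sc c = (SOME s. is_succ_of_wo r c s)" for c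
      have scs: "is_succ_of_wo r c (sc c)" for c using someI_ex[OF SX[of c]] unfolding sc_def .
      have sclt: "lt_wo r c (sc c)" for c using scs[of c] by (rule succ_lt)
      have hs: "Pi_ext (ss c) = Some (pp (sc c))" "Sig_ext (pp c) = Some (ss (sc c))" for c
        using hier_succ[OF H scs[of c]] Pc[of c] Pc[of "sc c"] by simp_all
      define U where "U c = dom (pp c) \<union> dom (ss c)" for c
      have below: "pp b \<subseteq>\<^sub>m pp c" "pp b \<subseteq>\<^sub>m ss c" "ss b \<subseteq>\<^sub>m pp c" "ss b \<subseteq>\<^sub>m ss c" if "lt_wo r b c" for b c
        using good_below[OF G Pc(1) Pc(2) that Pc(1) Pc(2)] by simp_all
      have Ult: "U b \<subseteq> U c" if "lt_wo r b c" for b c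
        using below[OF that] map_le_implies_dom_le unfolding U_def by blast
      have Ule: "U b \<subseteq> U c" if "b = c \<or> lt_wo r b c" for b c
        using that Ult by blast
      have Usc: "U c \<subseteq> dom (pp (sc c))" "U c \<subseteq> dom (ss (sc c))" for c
        using below[OF sclt[of c]] map_le_implies_dom_le unfolding U_def by blast+
      have nocol: "\<not> (U c = U (sc c) \<and> U (sc c) = U (sc (sc c)))" for c
      proof
        assume e: "U c = U (sc c) \<and> U (sc c) = U (sc (sc c))"
        define c1 where "c1 = sc c"
        define c2 where "c2 = sc c1"
        have e1: "U c = U c1" "U c1 = U c2" using e unfolding c1_def c2_def by simp_all
        have d1: "dom (pp c1) = U c1" using Usc(1)[of c] e1 unfolding U_def c1_def by blast
        have d2: "dom (ss c1) = U c1" using Usc(2)[of c] e1 unfolding U_def c1_def by blast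
        have d3: "dom (pp c2) = U c1" using Usc(1)[of c1] e1 unfolding U_def c2_def by blast
        have d4: "dom (ss c2) = U c1" using Usc(2)[of c1] e1 unfolding U_def c2_def by blast
        have q1: "ss c1 = pp c1" using map_eq_sub[of "ss c1" T "pp c1"] Bd d1 d2 by simp
        have q2: "pp c2 = pp c1" using map_eq_sub[of "pp c2" T "pp c1"] Bd d1 d3 by simp
        have q3: "ss c2 = pp c1" using map_eq_sub[of "ss c2" T "pp c1"] Bd d1 d4 by simp
        have "Pi_ext (pp c1) = Some (pp c1)" using hs(1)[of c1] q1 q2 unfolding c2_def by simp
        moreover have "Sig_ext (pp c1) = Some (pp c1)" using hs(2)[of c1] q3 unfolding c2_def by simp
        moreover have "Pi_ext (ss c1) \<noteq> None" using hs(1)[of c1] by simp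
        ultimately have "collapses_at m (pp c1)" using CI[of c1] by simp
        then show False using nc by blast
      qed
      define key where "key c = (if U c \<noteq> U (sc c) then (SOME x. x \<in> U (sc c) - U c, True)
          else (SOME x. x \<in> U (sc (sc c)) - U (sc c), False))" for c
      have K: "fst (key c) \<notin> U c \<and> fst (key c) \<in> U (sc (sc c)) \<and> (snd (key c) \<longrightarrow> fst (key c) \<in> U (sc c))
           \<and> (\<not> snd (key c) \<longrightarrow> U (sc c) \<noteq> U (sc (sc c)))" for c
      proof (cases "U c \<noteq> U (sc c)")
        case True
        have s1: "U c \<subseteq> U (sc c)" using Ult[OF sclt[of c]] .
        have s2: "U (sc c) \<subseteq> U (sc (sc c))" using Ult[OF sclt[of "sc c"]] .
        have ex: "\<exists>x. x \<in> U (sc c) - U c" using True s1 by blast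
        have "(SOME x. x \<in> U (sc c) - U c) \<in> U (sc c) - U c" by (rule someI_ex[OF ex])
        then show ?thesis unfolding key_def using True s2 by auto
      next
        case False
        then have ne: "U (sc c) \<noteq> U (sc (sc c))" using nocol[of c] by simp
        have s2: "U (sc c) \<subseteq> U (sc (sc c))" using Ult[OF sclt[of "sc c"]] .
        have ex: "\<exists>x. x \<in> U (sc (sc c)) - U (sc c)" using ne s2 by blast
        have "(SOME x. x \<in> U (sc (sc c)) - U (sc c)) \<in> U (sc (sc c)) - U (sc c)" by (rule someI_ex[OF ex])
        then show ?thesis unfolding key_def using False ne by auto
      qed
      have kne: "key c \<noteq> key d" if cd: "lt_wo r c d" for c d
      proof -
        have "sc c = d \<or> lt_wo r (sc c) d" by (rule wo_succ_le[OF W scs cd])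
        then show ?thesis
        proof
          assume e: "sc c = d"
          show ?thesis
          proof (cases "snd (key c)")
            case True
            then have "fst (key c) \<in> U d" using K[of c] e by simp
            then show ?thesis using K[of d] by auto
          next
            case False
            then have "U d \<noteq> U (sc d)" using K[of c] e by simp
            then have "snd (key d)" unfolding key_def by simp
            then show ?thesis using False by auto
          qed
        next
          assume l: "lt_wo r (sc c) d"
          have "sc (sc c) = d \<or> lt_wo r (sc (sc c)) d" by (rule wo_succ_le[OF W scs l])
          then have "U (sc (sc c)) \<subseteq> U d" by (rule Ule)
          then have "fst (key c) \<in> U d" using K[of c] by blast
          then show ?thesis using K[of d] by auto
        qed
      qed
      have "inj key"
      proof (rule injI)
        fix c d assume kk: "key c = key d"
        have "c = d \<or> lt_wo r c d \<or> lt_wo r d c" using wo_lt_total[OF W] Fr by simp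
        then show "c = d" using kne kk by metis
      qed
      then show False by (rule no_inj_pow[OF False])
    qed
  qed
qed

lemma to_map_val:
  fixes L :: "'v::lattice set" and \<phi> :: "'v \<Rightarrow> 'e::ordered_ab_group_add"
  assumes "valuation L \<phi>"
  shows "is_valuation_map (to_map L \<phi>)"
proof -
  have d: "dom (to_map L \<phi>) = L" unfolding to_map_def dom_def by auto
  have mv: "\<And>x. x \<in> L \<Longrightarrow> mval (to_map L \<phi>) x = \<phi> x" unfolding mval_def to_map_def by simp
  have sl: "sublattice L" using assms unfolding valuation_def by simp
  then have sl2: "\<And>a b. a \<in> L \<Longrightarrow> b \<in> L \<Longrightarrow> inf a b \<in> L \<and> sup a b \<in> L" unfolding sublattice_def by simp
  show ?thesis unfolding is_valuation_map_def valuation_def d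
    using assms sl sl2 mv unfolding valuation_def by simp
qed



theorem proposition5p35:
  fixes L C :: "'v::lattice set"
    and \<phi> \<psi> :: "'v \<Rightarrow> 'e::ordered_ab_group_add"
  assumes "valuation_system L \<phi>"
    and "valuation_system C \<psi>"
    and "extends C \<psi> L \<phi>"
    and "extendible C \<psi>"
  shows "extendible L \<phi> \<and> closure_val L \<phi> \<subseteq>\<^sub>m closure_val C \<psi>"
proof -
  have sd: "sigma_distributive TYPE('v)" and rc: "R_complete TYPE('e)" and vL: "valuation L \<phi>"
    using assms(1) unfolding valuation_system_def by simp_all
  have vC: "valuation C \<psi>" using assms(2) unfolding valuation_system_def by simp
  have vmL: "is_valuation_map (to_map L \<phi>)" by (rule to_map_val[OF vL])
  have vmC: "is_valuation_map (to_map C \<psi>)" by (rule to_map_val[OF vC])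
  have le: "to_map L \<phi> \<subseteq>\<^sub>m to_map C \<psi>"
    using assms(3) unfolding extends_def map_le_def to_map_def dom_def by auto
  obtain QC where QC: "collapses_at (to_map C \<psi>) QC" using assms(4) unfolding extendible_def by blast
  note pC = collapse_props[OF sd rc vmC QC]
  have leQ: "to_map L \<phi> \<subseteq>\<^sub>m QC" using map_le_trans[OF le pC(1)] .
  obtain QL where QL: "collapses_at (to_map L \<phi>) QL"
    using exists_collapse[OF sd rc vmL pC(2) pC(3) leQ] by blast
  note pL = collapse_props[OF sd rc vmL QL]
  have cL: "closure_val L \<phi> = QL" unfolding closure_val_def
    using collapse_uniq[OF sd rc vmL QL] QL by (metis the_equality)
  have cC: "closure_val C \<psi> = QC" unfolding closure_val_def
    using collapse_uniq[OF sd rc vmC QC] QC by (metis the_equality)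
  have "QL \<subseteq>\<^sub>m QC" by (rule pL(4)[OF pC(2) pC(3) leQ])
  then show ?thesis using QL cL cC unfolding extendible_def by blast
qed

end
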